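(* Let $L$ be the adjoint module of $gl(1|1)$; it is of type $\mathrm{III}_1$. For every $n\ge1$, \[ L^{\otimes n}\cong\mathrm{III}_1^{\otimes n}\cong\bigoplus_{\ell=-n+2}^{n}\binom{2n-2}{n-\ell}\,\mathrm{III}_\ell \] (parities of highest-weight vectors suppressed).
   Context: $gl(1|1)$ is the Lie superalgebra with basis $H,G$ (even), $Q_+,Q_-$ (odd), nonzero supercommutators $[G,Q_\pm]=\pm Q_\pm$, $[Q_+,Q_-]=H$ (so $Q_+Q_-+Q_-Q_+=H$ in the enveloping algebra). A weight is a $G$-eigenvalue. $\mathrm{III}_\gamma$ denotes the module with basis $v,Q_+v,Q_-v,Q_+Q_-v$ (all nonzero) of $G$-weights $\gamma-1,\gamma,\gamma-2,\gamma-1$, with $H$ acting by $0$ and $Q_-Q_+v=-Q_+Q_-v$ (with either parity of the highest-weight vector $Q_+v$). Tensor products of $\mathbb Z_2$-graded modules carry the usual super action. *)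

theory Defs
  imports Main Complex_Main "Jordan_Normal_Form.Matrix"
begin

text \<open>Basis of gl(1|1): H, G even; Qp = Q_+, Qm = Q_- odd.\<close>
datatype gen = H | G | Qp | Qm

fun odd_gen :: "gen \<Rightarrow> bool" where
  "odd_gen H = False" | "odd_gen G = False" | "odd_gen Qp = True" | "odd_gen Qm = True"

text \<open>A finite-dimensional Z2-graded module over gl(1|1), given in a homogeneous basis
  e_0,...,e_(d-1): smod_dim = d, smod_par i = True iff e_i is odd, and smod_act x is the
  d x d matrix of the action of the basis element x (column j = image of e_j).\<close>
record smod =
  smod_dim :: nat
  smod_par :: "nat \<Rightarrow> bool"
  smod_act :: "gen \<Rightarrow> complex mat"

text \<open>Coefficient of z in the supercommutator [x,y]:
  [G,Q_+] = Q_+, [G,Q_-] = -Q_-, [Q_+,Q_-] = [Q_-,Q_+] = H, and (super)antisymmetry.\<close>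
fun brk :: "gen \<Rightarrow> gen \<Rightarrow> gen \<Rightarrow> complex" where
  "brk G Qp z = (if z = Qp then 1 else 0)"
| "brk Qp G z = (if z = Qp then -1 else 0)"
| "brk G Qm z = (if z = Qm then -1 else 0)"
| "brk Qm G z = (if z = Qm then 1 else 0)"
| "brk Qp Qm z = (if z = H then 1 else 0)"
| "brk Qm Qp z = (if z = H then 1 else 0)"
| "brk _ _ z = 0"

fun gen_of :: "nat \<Rightarrow> gen" where
  "gen_of 0 = H" | "gen_of (Suc 0) = G" | "gen_of (Suc (Suc 0)) = Qp" | "gen_of _ = Qm"

text \<open>The adjoint module L: basis H, G, Q_+, Q_- (indices 0,1,2,3), x acts by ad x = [x,-].\<close>
definition adjoint_mod :: smod where
  "adjoint_mod = \<lparr> smod_dim = 4, smod_par = (\<lambda>i. odd_gen (gen_of i)),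
     smod_act = (\<lambda>x. mat 4 4 (\<lambda>(i,j). brk x (gen_of j) (gen_of i))) \<rparr>"

text \<open>The module III_\<gamma> with basis v, Q_+ v, Q_- v, Q_+Q_- v (indices 0,1,2,3),
  G-weights \<gamma>-1, \<gamma>, \<gamma>-2, \<gamma>-1, H acting by 0, Q_-Q_+ v = -Q_+Q_- v, and Q_\<pm>^2 = 0.
  The parameter p is the parity of v (so Q_+ v, the highest-weight vector, has parity \<not>p).\<close>
definition III :: "int \<Rightarrow> bool \<Rightarrow> smod" where
  "III \<gamma> p = \<lparr> smod_dim = 4,
     smod_par = (\<lambda>i. if i = 1 \<or> i = 2 then \<not> p else p),
     smod_act = (\<lambda>x. mat 4 4 (\<lambda>(i,j).
        (case x of
           H \<Rightarrow> 0
         | G \<Rightarrow> (if i = j then of_int \<gamma> - (if i = 0 \<or> i = 3 then 1 else if i = 1 then 0 else 2) else 0)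
         | Qp \<Rightarrow> (if (i,j) = (1,0) \<or> (i,j) = (3,2) then 1 else 0)
         | Qm \<Rightarrow> (if (i,j) = (2,0) then 1 else if (i,j) = (3,1) then -1 else 0)))) \<rparr>"

text \<open>Super tensor product: basis e_a \<otimes> f_b at index a * dim N + b, parity |a| + |b|,
  x(v \<otimes> w) = xv \<otimes> w + (-1)^(|x||v|) v \<otimes> xw.\<close>
definition stensor :: "smod \<Rightarrow> smod \<Rightarrow> smod" where
  "stensor M N = (let dM = smod_dim M; dN = smod_dim N in
    \<lparr> smod_dim = dM * dN,
      smod_par = (\<lambda>i. smod_par M (i div dN) \<noteq> smod_par N (i mod dN)),
      smod_act = (\<lambda>x. mat (dM * dN) (dM * dN) (\<lambda>(i,j).
         let a = i div dN; b = i mod dN; a' = j div dN; b' = j mod dN in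
         (if b = b' then smod_act M x $$ (a,a') else 0)
         + (if a = a' then (if odd_gen x \<and> smod_par M a' then -1 else 1) * smod_act N x $$ (b,b')
            else 0))) \<rparr>)"

definition triv_mod :: smod where
  "triv_mod = \<lparr> smod_dim = 1, smod_par = (\<lambda>_. False), smod_act = (\<lambda>_. 0\<^sub>m 1 1) \<rparr>"

fun stensor_pow :: "smod \<Rightarrow> nat \<Rightarrow> smod" where
  "stensor_pow M 0 = triv_mod"
| "stensor_pow M (Suc n) = stensor (stensor_pow M n) M"

definition dsum :: "smod \<Rightarrow> smod \<Rightarrow> smod" where
  "dsum M N = (let dM = smod_dim M; dN = smod_dim N in
    \<lparr> smod_dim = dM + dN,
      smod_par = (\<lambda>i. if i < dM then smod_par M i else smod_par N (i - dM)),
      smod_act = (\<lambda>x. mat (dM + dN) (dM + dN) (\<lambda>(i,j).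
         if i < dM \<and> j < dM then smod_act M x $$ (i,j)
         else if dM \<le> i \<and> dM \<le> j then smod_act N x $$ (i - dM, j - dM) else 0)) \<rparr>)"

definition zero_mod :: smod where
  "zero_mod = \<lparr> smod_dim = 0, smod_par = (\<lambda>_. False), smod_act = (\<lambda>_. 0\<^sub>m 0 0) \<rparr>"

definition dsum_list :: "smod list \<Rightarrow> smod" where
  "dsum_list Ms = foldr dsum Ms zero_mod"

definition smod_iso :: "smod \<Rightarrow> smod \<Rightarrow> bool" where
  "smod_iso M N \<longleftrightarrow> smod_dim M = smod_dim N \<and>
     (\<exists>T. T \<in> carrier_mat (smod_dim N) (smod_dim M) \<and> invertible_mat T \<and>
        (\<forall>i < smod_dim N. \<forall>j < smod_dim M. T $$ (i,j) \<noteq> 0 \<longrightarrow> smod_par N i = smod_par M j) \<and>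
        (\<forall>x. T * smod_act M x = smod_act N x * T))"

end

theory Submission
  imports Defs
begin

definition wfm :: "smod \<Rightarrow> bool" where
  "wfm M \<longleftrightarrow> (\<forall>x. smod_act M x \<in> carrier_mat (smod_dim M) (smod_dim M))"

definition sgm :: "bool \<Rightarrow> complex" where "sgm b = (if b then -1 else 1)"

definition parm :: "smod \<Rightarrow> complex mat" where
  "parm M = mat (smod_dim M) (smod_dim M) (\<lambda>(i,j). if i = j then sgm (smod_par M i) else 0)"

lemma parm_carrier[simp]: "parm M \<in> carrier_mat (smod_dim M) (smod_dim M)"
  by (simp add: parm_def)

lemma parm_dim[simp]: "dim_row (parm M) = smod_dim M" "dim_col (parm M) = smod_dim M"
  by (simp_all add: parm_def)

lemma wf_carrier[simp]: "wfm M \<Longrightarrow> smod_act M x \<in> carrier_mat (smod_dim M) (smod_dim M)"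
  by (simp add: wfm_def)

lemma mult_entry: "A \<in> carrier_mat r k \<Longrightarrow> B \<in> carrier_mat k c \<Longrightarrow> i<r \<Longrightarrow> j<c \<Longrightarrow>
   (A*B)$$(i,j) = (\<Sum>l<k. A$$(i,l) * B$$(l,j))"
  by (auto simp: scalar_prod_def atLeast0LessThan intro!: sum.cong)

lemma sum_delta_r: "j < (k::nat) \<Longrightarrow> (\<Sum>l<k. f l * (if l = j then g l else 0)) = f j * (g j :: complex)"
proof -
  assume j: "j < k"
  have "(\<Sum>l<k. f l * (if l = j then g l else 0)) = (\<Sum>l<k. if l = j then f l * g l else 0)"
    by (rule sum.cong) auto
  also have "\<dots> = f j * g j" using j by (subst sum.delta) auto
  finally show ?thesis .
qed

lemma sum_delta_l: "i < (k::nat) \<Longrightarrow> (\<Sum>l<k. (if i = l then g l else 0) * f l) = g i * (f i :: complex)"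
proof -
  assume j: "i < k"
  have "(\<Sum>l<k. (if i = l then g l else 0) * f l) = (\<Sum>l<k. if i = l then g l * f l else 0)"
    by (rule sum.cong) auto
  also have "\<dots> = g i * f i" using j by (subst sum.delta') auto
  finally show ?thesis .
qed

lemma sgm_eq: "sgm a = sgm b \<longleftrightarrow> a = b"
  by (simp add: sgm_def)

lemma parm_right: assumes T: "T \<in> carrier_mat n (smod_dim M)" and i: "i < n" and j: "j < smod_dim M"
  shows "(T * parm M) $$ (i,j) = T $$ (i,j) * sgm (smod_par M j)"
proof -
  have "(T * parm M) $$ (i,j) = (\<Sum>l<smod_dim M. T$$(i,l) * (if l = j then sgm (smod_par M l) else 0))"
    by (subst mult_entry[OF T parm_carrier i j]) (rule sum.cong, auto simp: parm_def j)
  also have "\<dots> = T $$ (i,j) * sgm (smod_par M j)" by (rule sum_delta_r[OF j])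
  finally show ?thesis .
qed

lemma parm_left: assumes T: "T \<in> carrier_mat (smod_dim N) m" and i: "i < smod_dim N" and j: "j < m"
  shows "(parm N * T) $$ (i,j) = sgm (smod_par N i) * T $$ (i,j)"
proof -
  have "(parm N * T) $$ (i,j) = (\<Sum>l<smod_dim N. (if i = l then sgm (smod_par N l) else 0) * T$$(l,j))"
    by (subst mult_entry[OF parm_carrier T i j]) (rule sum.cong, auto simp: parm_def i)
  also have "\<dots> = sgm (smod_par N i) * T $$ (i,j)" by (rule sum_delta_l[OF i])
  finally show ?thesis .
qed

lemma even_iff:
  assumes T: "T \<in> carrier_mat (smod_dim N) (smod_dim M)"
  shows "(\<forall>i<smod_dim N. \<forall>j<smod_dim M. T$$(i,j) \<noteq> 0 \<longrightarrow> smod_par N i = smod_par M j)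
      \<longleftrightarrow> T * parm M = parm N * T"
proof
  assume h: "\<forall>i<smod_dim N. \<forall>j<smod_dim M. T$$(i,j) \<noteq> 0 \<longrightarrow> smod_par N i = smod_par M j"
  show "T * parm M = parm N * T"
  proof (rule eq_matI)
    fix i j assume "i < dim_row (parm N * T)" "j < dim_col (parm N * T)"
    then have i: "i < smod_dim N" and j: "j < smod_dim M" using T by auto
    show "(T * parm M) $$ (i,j) = (parm N * T) $$ (i,j)"
      unfolding parm_right[OF T i j] parm_left[OF T i j]
    proof -
      have "T$$(i,j) = 0 \<or> smod_par N i = smod_par M j" using h i j by auto
      then show "T $$ (i, j) * sgm (smod_par M j) = sgm (smod_par N i) * T $$ (i, j)" by auto
    qed
  qed (use T in auto)
next
  assume h: "T * parm M = parm N * T"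
  show "\<forall>i<smod_dim N. \<forall>j<smod_dim M. T$$(i,j) \<noteq> 0 \<longrightarrow> smod_par N i = smod_par M j"
  proof (intro allI impI)
    fix i j assume i: "i < smod_dim N" and j: "j < smod_dim M" and nz: "T $$ (i,j) \<noteq> 0"
    have e: "(T * parm M) $$ (i,j) = (parm N * T) $$ (i,j)" using h by simp
    have "T $$ (i,j) * sgm (smod_par M j) = sgm (smod_par N i) * T $$ (i,j)"
      using e unfolding parm_right[OF T i j] parm_left[OF T i j] .
    then have "sgm (smod_par M j) = sgm (smod_par N i)" using nz by (metis mult.commute mult_left_cancel)
    then show "smod_par N i = smod_par M j" by (simp add: sgm_eq)
  qed
qed

lemma invI: "T \<in> carrier_mat n n \<Longrightarrow> S \<in> carrier_mat n n \<Longrightarrow> T * S = 1\<^sub>m n \<Longrightarrow> S * T = 1\<^sub>m n \<Longrightarrow> invertible_mat T"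
  unfolding invertible_mat_def inverts_mat_def square_mat.simps by auto

lemma invE: assumes "invertible_mat T" "T \<in> carrier_mat n n"
  obtains S where "S \<in> carrier_mat n n" "T * S = 1\<^sub>m n" "S * T = 1\<^sub>m n"
proof -
  from assms obtain S where TS: "T * S = 1\<^sub>m n" and ST: "S * T = 1\<^sub>m (dim_row S)"
    unfolding invertible_mat_def inverts_mat_def by auto
  have "dim_col S = n" using TS by (metis index_mult_mat(3) index_one_mat(3))
  moreover have "dim_row S = n" using ST assms(2) by (metis carrier_matD(2) index_mult_mat(3) index_one_mat(3))
  ultimately show ?thesis using that TS ST by auto
qed

lemma isoI:
  assumes "smod_dim M = n" "smod_dim N = n" "T \<in> carrier_mat n n" "S \<in> carrier_mat n n"
    "T * S = 1\<^sub>m n" "S * T = 1\<^sub>m n" "T * parm M = parm N * T" "\<And>x. T * smod_act M x = smod_act N x * T"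
  shows "smod_iso M N"
  unfolding smod_iso_def
  using assms even_iff[of T N M] invI[of T n S] by auto

lemma isoE:
  assumes "smod_iso M N"
  obtains T S where "smod_dim N = smod_dim M" "T \<in> carrier_mat (smod_dim M) (smod_dim M)" "S \<in> carrier_mat (smod_dim M) (smod_dim M)"
    "T * S = 1\<^sub>m (smod_dim M)" "S * T = 1\<^sub>m (smod_dim M)" "T * parm M = parm N * T" "\<And>x. T * smod_act M x = smod_act N x * T"
proof -
  from assms obtain T where d: "smod_dim M = smod_dim N" and T: "T \<in> carrier_mat (smod_dim N) (smod_dim M)"
    and inv: "invertible_mat T" and ev: "\<forall>i < smod_dim N. \<forall>j < smod_dim M. T $$ (i,j) \<noteq> 0 \<longrightarrow> smod_par N i = smod_par M j"
    and act: "\<forall>x. T * smod_act M x = smod_act N x * T"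
    unfolding smod_iso_def by auto
  have T': "T \<in> carrier_mat (smod_dim M) (smod_dim M)" using T d by simp
  obtain S where "S \<in> carrier_mat (smod_dim M) (smod_dim M)" "T * S = 1\<^sub>m (smod_dim M)" "S * T = 1\<^sub>m (smod_dim M)"
    using invE[OF inv T'] by blast
  then show ?thesis using that[of T S] d T' act even_iff[OF T] ev by auto
qed

lemma conj_swap:
  fixes T S A B :: "complex mat"
  assumes c: "T \<in> carrier_mat n n" "S \<in> carrier_mat n n" "A \<in> carrier_mat n n" "B \<in> carrier_mat n n"
    and TS: "T * S = 1\<^sub>m n" and ST: "S * T = 1\<^sub>m n" and h: "T * A = B * T"
  shows "S * B = A * S"
proof -
  have d: "dim_row S = n" "dim_col S = n" "dim_row B = n" "dim_col B = n" "dim_row A = n" "dim_col A = n" using c by auto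
  have "S * B = S * B * (T * S)" unfolding TS using right_mult_one_mat[of "S*B" n n] c by simp
  also have "\<dots> = S * (B * T) * S" using c by (simp add: assoc_mult_mat[of _ n n _ n _ n])
  also have "\<dots> = S * (T * A) * S" using h by simp
  also have "\<dots> = (S * T) * A * S" using c by (simp add: assoc_mult_mat[of _ n n _ n _ n])
  also have "\<dots> = A * S" using ST d by simp
  finally show ?thesis .
qed

lemma iso_sym: assumes "wfm M" "wfm N" "smod_iso M N" shows "smod_iso N M"
proof -
  obtain T S where d: "smod_dim N = smod_dim M" and c: "T \<in> carrier_mat (smod_dim M) (smod_dim M)" "S \<in> carrier_mat (smod_dim M) (smod_dim M)"
    and TS: "T * S = 1\<^sub>m (smod_dim M)" and ST: "S * T = 1\<^sub>m (smod_dim M)" and p: "T * parm M = parm N * T"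
    and a: "\<And>x. T * smod_act M x = smod_act N x * T"
    using isoE[OF assms(3)] by blast
  show ?thesis
  proof (rule isoI[OF d refl c(2) c(1) ST TS])
    show "S * parm N = parm M * S" using conj_swap[OF c(1,2) _ _ TS ST p] parm_carrier[of N] d by simp
    fix x show "S * smod_act N x = smod_act M x * S"
      using conj_swap[OF c(1,2) _ _ TS ST a[of x]] d wf_carrier[OF assms(1), of x] wf_carrier[OF assms(2), of x] by simp
  qed
qed

lemma iso_trans: assumes "wfm M" "wfm N" "wfm K" "smod_iso M N" "smod_iso N K" shows "smod_iso M K"
proof -
  obtain T S where d: "smod_dim N = smod_dim M" and c: "T \<in> carrier_mat (smod_dim M) (smod_dim M)" "S \<in> carrier_mat (smod_dim M) (smod_dim M)"
    and TS: "T * S = 1\<^sub>m (smod_dim M)" and ST: "S * T = 1\<^sub>m (smod_dim M)" and p: "T * parm M = parm N * T"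
    and a: "\<And>x. T * smod_act M x = smod_act N x * T"
    using isoE[OF assms(4)] by blast
  obtain T2 S2 where d2: "smod_dim K = smod_dim N" and c2: "T2 \<in> carrier_mat (smod_dim N) (smod_dim N)" "S2 \<in> carrier_mat (smod_dim N) (smod_dim N)"
    and TS2: "T2 * S2 = 1\<^sub>m (smod_dim N)" and ST2: "S2 * T2 = 1\<^sub>m (smod_dim N)" and p2: "T2 * parm N = parm K * T2"
    and a2: "\<And>x. T2 * smod_act N x = smod_act K x * T2"
    using isoE[OF assms(5)] by blast
  define n where "n = smod_dim M"
  have cc: "T \<in> carrier_mat n n" "S \<in> carrier_mat n n" "T2 \<in> carrier_mat n n" "S2 \<in> carrier_mat n n"
    "parm M \<in> carrier_mat n n" "parm N \<in> carrier_mat n n" "parm K \<in> carrier_mat n n"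
    using c c2 d d2 n_def parm_carrier by auto
  have ca: "smod_act M x \<in> carrier_mat n n" "smod_act N x \<in> carrier_mat n n" "smod_act K x \<in> carrier_mat n n" for x
    using assms(1-3) d d2 n_def by (auto simp: wfm_def)
  show ?thesis
  proof (rule isoI[of M n K "T2 * T" "S * S2"])
    show "smod_dim M = n" "smod_dim K = n" using n_def d d2 by auto
    show "T2 * T \<in> carrier_mat n n" "S * S2 \<in> carrier_mat n n" using cc by auto
    have "T2 * T * (S * S2) = T2 * (T * S) * S2" using cc by (simp add: assoc_mult_mat[of _ n n _ n _ n])
    then show "T2 * T * (S * S2) = 1\<^sub>m n" using TS TS2 cc d n_def by simp
    have "S * S2 * (T2 * T) = S * (S2 * T2) * T" using cc by (simp add: assoc_mult_mat[of _ n n _ n _ n])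
    then show "S * S2 * (T2 * T) = 1\<^sub>m n" using ST ST2 cc d n_def by simp
    have "T2 * T * parm M = T2 * (T * parm M)" using cc by (simp add: assoc_mult_mat[of _ n n _ n _ n])
    also have "\<dots> = T2 * parm N * T" using p cc by (simp add: assoc_mult_mat[of _ n n _ n _ n])
    also have "\<dots> = parm K * (T2 * T)" using p2 cc by (simp add: assoc_mult_mat[of _ n n _ n _ n])
    finally show "T2 * T * parm M = parm K * (T2 * T)" .
    fix x
    have "T2 * T * smod_act M x = T2 * (T * smod_act M x)" using cc ca by (simp add: assoc_mult_mat[of _ n n _ n _ n])
    also have "\<dots> = T2 * smod_act N x * T" using a cc ca by (simp add: assoc_mult_mat[of _ n n _ n _ n])
    also have "\<dots> = smod_act K x * (T2 * T)" using a2 cc ca by (simp add: assoc_mult_mat[of _ n n _ n _ n])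
    finally show "T2 * T * smod_act M x = smod_act K x * (T2 * T)" .
  qed
qed

lemma iso_eqI:
  assumes "wfm M" "smod_dim N = smod_dim M" "\<And>i. i < smod_dim M \<Longrightarrow> smod_par N i = smod_par M i"
    "\<And>x. smod_act N x = smod_act M x"
  shows "smod_iso M N"
proof (rule isoI[of M "smod_dim M" N "1\<^sub>m (smod_dim M)" "1\<^sub>m (smod_dim M)"])
  have "parm N = parm M" unfolding parm_def using assms(2,3) by (intro eq_matI) auto
  then show "1\<^sub>m (smod_dim M) * parm M = parm N * 1\<^sub>m (smod_dim M)" by simp
  fix x show "1\<^sub>m (smod_dim M) * smod_act M x = smod_act N x * 1\<^sub>m (smod_dim M)"
    using assms(4) left_mult_one_mat[OF wf_carrier[OF assms(1), of x]] right_mult_one_mat[OF wf_carrier[OF assms(1), of x]] by simp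
qed (use assms in auto)

lemma iso_refl: "wfm M \<Longrightarrow> smod_iso M M"
  by (rule iso_eqI) auto

lemma dsum_dim[simp]: "smod_dim (dsum A B) = smod_dim A + smod_dim B"
  by (simp add: dsum_def Let_def)

lemma dsum_par: "smod_par (dsum A B) i = (if i < smod_dim A then smod_par A i else smod_par B (i - smod_dim A))"
  by (simp add: dsum_def Let_def)

lemma wf_dsum: "wfm A \<Longrightarrow> wfm B \<Longrightarrow> wfm (dsum A B)"
  by (simp add: wfm_def dsum_def Let_def)

lemma dsum_act: assumes "wfm A" "wfm B"
  shows "smod_act (dsum A B) x = four_block_mat (smod_act A x) (0\<^sub>m (smod_dim A) (smod_dim B)) (0\<^sub>m (smod_dim B) (smod_dim A)) (smod_act B x)"
  using wf_carrier[OF assms(1), of x] wf_carrier[OF assms(2), of x]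
  by (intro eq_matI) (auto simp: dsum_def Let_def)

lemma parm_dsum: "parm (dsum A B) = four_block_mat (parm A) (0\<^sub>m (smod_dim A) (smod_dim B)) (0\<^sub>m (smod_dim B) (smod_dim A)) (parm B)"
  by (intro eq_matI) (auto simp: parm_def dsum_def Let_def)

lemma fb_mult:
  fixes A1 A2 D1 D2 :: "complex mat"
  assumes "A1 \<in> carrier_mat a a" "A2 \<in> carrier_mat a a" "D1 \<in> carrier_mat b b" "D2 \<in> carrier_mat b b"
  shows "four_block_mat A1 (0\<^sub>m a b) (0\<^sub>m b a) D1 * four_block_mat A2 (0\<^sub>m a b) (0\<^sub>m b a) D2
     = four_block_mat (A1 * A2) (0\<^sub>m a b) (0\<^sub>m b a) (D1 * D2)"
proof -
  have c: "A1 * A2 \<in> carrier_mat a a" "D1 * D2 \<in> carrier_mat b b" using assms by auto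
  show ?thesis
    apply (subst mult_four_block_mat[where ?nr1.0=a and ?n1.0=a and ?n2.0=b and ?nr2.0=b and ?nc1.0=a and ?nc2.0=b])
    using assms c by (auto simp: right_mult_zero_mat[of _ a a] right_mult_zero_mat[of _ b b])
qed

lemma dsum_cong:
  assumes w: "wfm A" "wfm A'" "wfm B" "wfm B'" and i1: "smod_iso A A'" and i2: "smod_iso B B'"
  shows "smod_iso (dsum A B) (dsum A' B')"
proof -
  obtain T1 S1 where d1: "smod_dim A' = smod_dim A" and c1: "T1 \<in> carrier_mat (smod_dim A) (smod_dim A)" "S1 \<in> carrier_mat (smod_dim A) (smod_dim A)"
    and TS1: "T1 * S1 = 1\<^sub>m (smod_dim A)" and ST1: "S1 * T1 = 1\<^sub>m (smod_dim A)" and p1: "T1 * parm A = parm A' * T1"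
    and a1: "\<And>x. T1 * smod_act A x = smod_act A' x * T1"
    using isoE[OF i1] by blast
  obtain T2 S2 where d2: "smod_dim B' = smod_dim B" and c2: "T2 \<in> carrier_mat (smod_dim B) (smod_dim B)" "S2 \<in> carrier_mat (smod_dim B) (smod_dim B)"
    and TS2: "T2 * S2 = 1\<^sub>m (smod_dim B)" and ST2: "S2 * T2 = 1\<^sub>m (smod_dim B)" and p2: "T2 * parm B = parm B' * T2"
    and a2: "\<And>x. T2 * smod_act B x = smod_act B' x * T2"
    using isoE[OF i2] by blast
  define a where "a = smod_dim A"
  define b where "b = smod_dim B"
  note cs = c1 c2 parm_carrier[of A] parm_carrier[of B] parm_carrier[of A'] parm_carrier[of B']
  note ca = wf_carrier[OF w(1)] wf_carrier[OF w(2)] wf_carrier[OF w(3)] wf_carrier[OF w(4)]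
  show ?thesis
  proof (rule isoI[of _ "a+b" _ "four_block_mat T1 (0\<^sub>m a b) (0\<^sub>m b a) T2" "four_block_mat S1 (0\<^sub>m a b) (0\<^sub>m b a) S2"])
    show "smod_dim (dsum A B) = a + b" "smod_dim (dsum A' B') = a + b" using d1 d2 a_def b_def by auto
    show "four_block_mat T1 (0\<^sub>m a b) (0\<^sub>m b a) T2 \<in> carrier_mat (a + b) (a + b)"
         "four_block_mat S1 (0\<^sub>m a b) (0\<^sub>m b a) S2 \<in> carrier_mat (a + b) (a + b)"
      using c1 c2 a_def b_def by auto
    show "four_block_mat T1 (0\<^sub>m a b) (0\<^sub>m b a) T2 * four_block_mat S1 (0\<^sub>m a b) (0\<^sub>m b a) S2 = 1\<^sub>m (a + b)"
      using fb_mult[of T1 a S1 T2 b S2] c1 c2 TS1 TS2 a_def b_def by simp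
    show "four_block_mat S1 (0\<^sub>m a b) (0\<^sub>m b a) S2 * four_block_mat T1 (0\<^sub>m a b) (0\<^sub>m b a) T2 = 1\<^sub>m (a + b)"
      using fb_mult[of S1 a T1 S2 b T2] c1 c2 ST1 ST2 a_def b_def by simp
    show "four_block_mat T1 (0\<^sub>m a b) (0\<^sub>m b a) T2 * parm (dsum A B) = parm (dsum A' B') * four_block_mat T1 (0\<^sub>m a b) (0\<^sub>m b a) T2"
      unfolding parm_dsum using fb_mult[of T1 a "parm A" T2 b "parm B"] fb_mult[of "parm A'" a T1 "parm B'" b T2]
        cs d1 d2 a_def b_def p1 p2 by simp
    fix x
    show "four_block_mat T1 (0\<^sub>m a b) (0\<^sub>m b a) T2 * smod_act (dsum A B) x = smod_act (dsum A' B') x * four_block_mat T1 (0\<^sub>m a b) (0\<^sub>m b a) T2"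
      unfolding dsum_act[OF w(1,3)] dsum_act[OF w(2,4)]
      using fb_mult[of T1 a "smod_act A x" T2 b "smod_act B x"] fb_mult[of "smod_act A' x" a T1 "smod_act B' x" b T2]
        cs ca d1 d2 a_def b_def a1 a2 by simp
  qed
qed

lemma dsum_assoc: "dsum (dsum A B) C = dsum A (dsum B C)"
proof -
  have d: "smod_dim (dsum (dsum A B) C) = smod_dim (dsum A (dsum B C))" by simp
  have p: "smod_par (dsum (dsum A B) C) = smod_par (dsum A (dsum B C))"
    by (rule ext) (auto simp: dsum_par)
  have a: "smod_act (dsum (dsum A B) C) = smod_act (dsum A (dsum B C))"
    by (rule ext, rule eq_matI) (auto simp: dsum_def Let_def)
  show ?thesis using d p a by (intro smod.equality) auto
qed

lemma fb_swap:
  fixes A B :: "complex mat"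
  assumes "A \<in> carrier_mat a a" "B \<in> carrier_mat b b"
  shows "four_block_mat (0\<^sub>m b a) (1\<^sub>m b) (1\<^sub>m a) (0\<^sub>m a b) * four_block_mat A (0\<^sub>m a b) (0\<^sub>m b a) B
    = four_block_mat B (0\<^sub>m b a) (0\<^sub>m a b) A * four_block_mat (0\<^sub>m b a) (1\<^sub>m b) (1\<^sub>m a) (0\<^sub>m a b)"
proof -
  have L: "four_block_mat (0\<^sub>m b a) (1\<^sub>m b) (1\<^sub>m a) (0\<^sub>m a b) * four_block_mat A (0\<^sub>m a b) (0\<^sub>m b a) B
    = four_block_mat (0\<^sub>m b a) B A (0\<^sub>m a b)"
    apply (subst mult_four_block_mat[where ?nr1.0=b and ?n1.0=a and ?n2.0=b and ?nr2.0=a and ?nc1.0=a and ?nc2.0=b])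
    using assms by (auto simp: right_mult_zero_mat[of _ a a] right_mult_zero_mat[of _ b b])
  have R: "four_block_mat B (0\<^sub>m b a) (0\<^sub>m a b) A * four_block_mat (0\<^sub>m b a) (1\<^sub>m b) (1\<^sub>m a) (0\<^sub>m a b)
    = four_block_mat (0\<^sub>m b a) B A (0\<^sub>m a b)"
    apply (subst mult_four_block_mat[where ?nr1.0=b and ?n1.0=b and ?n2.0=a and ?nr2.0=a and ?nc1.0=a and ?nc2.0=b])
    using assms by (auto simp: right_mult_zero_mat[of _ a a] right_mult_zero_mat[of _ b b])
  show ?thesis using L R by simp
qed

lemma wf_zero: "wfm zero_mod" by (simp add: wfm_def zero_mod_def)

lemma dsum_comm:
  assumes w: "wfm A" "wfm B"
  shows "smod_iso (dsum A B) (dsum B A)"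
proof -
  define a where "a = smod_dim A"
  define b where "b = smod_dim B"
  define P :: "complex mat" where "P = four_block_mat (0\<^sub>m b a) (1\<^sub>m b) (1\<^sub>m a) (0\<^sub>m a b)"
  define Q :: "complex mat" where "Q = four_block_mat (0\<^sub>m a b) (1\<^sub>m a) (1\<^sub>m b) (0\<^sub>m b a)"
  have PQ: "P * Q = 1\<^sub>m (a+b)"
    unfolding P_def Q_def
    apply (subst mult_four_block_mat[where ?nr1.0=b and ?n1.0=a and ?n2.0=b and ?nr2.0=a and ?nc1.0=b and ?nc2.0=a])
    by (auto simp: add.commute)
  have QP: "Q * P = 1\<^sub>m (a+b)"
    unfolding P_def Q_def
    apply (subst mult_four_block_mat[where ?nr1.0=a and ?n1.0=b and ?n2.0=a and ?nr2.0=b and ?nc1.0=a and ?nc2.0=b])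
    by auto
  show ?thesis
  proof (rule isoI[of _ "a+b" _ P Q])
    show "smod_dim (dsum A B) = a + b" "smod_dim (dsum B A) = a + b" using a_def b_def by auto
    show "P \<in> carrier_mat (a + b) (a + b)" "Q \<in> carrier_mat (a + b) (a + b)" unfolding P_def Q_def
      using four_block_carrier_mat[of "0\<^sub>m b a" b a "0\<^sub>m a b" a b] four_block_carrier_mat[of "0\<^sub>m a b" a b "0\<^sub>m b a" b a]
      by (auto simp: add.commute)
    show "P * Q = 1\<^sub>m (a+b)" "Q * P = 1\<^sub>m (a+b)" by (rule PQ, rule QP)
    show "P * parm (dsum A B) = parm (dsum B A) * P"
      unfolding parm_dsum P_def using fb_swap[of "parm A" a "parm B" b] a_def b_def by simp
    fix x show "P * smod_act (dsum A B) x = smod_act (dsum B A) x * P"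
      unfolding dsum_act[OF w] dsum_act[OF w(2,1)] P_def
      using fb_swap[of "smod_act A x" a "smod_act B x" b] a_def b_def wf_carrier[OF w(1)] wf_carrier[OF w(2)] by simp
  qed
qed

lemma dsum_zero_r: assumes "wfm A" shows "smod_iso A (dsum A zero_mod)"
proof (rule iso_eqI[OF assms])
  fix x show "smod_act (dsum A zero_mod) x = smod_act A x"
    using wf_carrier[OF assms, of x] by (intro eq_matI) (auto simp: dsum_def zero_mod_def Let_def)
qed (auto simp: dsum_def zero_mod_def Let_def)

lemma dsum_zero_l: assumes "wfm A" shows "smod_iso A (dsum zero_mod A)"
proof (rule iso_eqI[OF assms])
  fix x show "smod_act (dsum zero_mod A) x = smod_act A x"
    using wf_carrier[OF assms, of x] by (intro eq_matI) (auto simp: dsum_def zero_mod_def Let_def)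
qed (auto simp: dsum_def zero_mod_def Let_def)

definition kron :: "complex mat \<Rightarrow> complex mat \<Rightarrow> complex mat" where
  "kron A B = mat (dim_row A * dim_row B) (dim_col A * dim_col B)
     (\<lambda>(i,j). A $$ (i div dim_row B, j div dim_col B) * B $$ (i mod dim_row B, j mod dim_col B))"

lemma kron_carrier[simp]: "kron A B \<in> carrier_mat (dim_row A * dim_row B) (dim_col A * dim_col B)"
  by (simp add: kron_def)

lemma kron_dim[simp]: "dim_row (kron A B) = dim_row A * dim_row B" "dim_col (kron A B) = dim_col A * dim_col B"
  by (simp_all add: kron_def)

lemma kron_index: "i < dim_row A * dim_row B \<Longrightarrow> j < dim_col A * dim_col B \<Longrightarrow>
  kron A B $$ (i,j) = A $$ (i div dim_row B, j div dim_col B) * B $$ (i mod dim_row B, j mod dim_col B)"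
  by (simp add: kron_def)

lemma sum_split: "(\<Sum>k<m*n. f k) = (\<Sum>u<m. \<Sum>v<n. f (u*n+v :: nat)) "
proof -
  have "(\<Sum>k<m*n. f k) = (\<Sum>u<m. sum f {u*n..<u*n+n})" by (rule sum.nat_group[symmetric])
  also have "\<dots> = (\<Sum>u<m. \<Sum>v<n. f (u*n+v))"
  proof (rule sum.cong[OF refl])
    fix u
    have "sum f {u*n..<u*n+n} = sum f ((\<lambda>v. u*n+v) ` {..<n})"
      by (simp add: lessThan_atLeast0 image_add_atLeastLessThan add.commute)
    also have "\<dots> = (\<Sum>v<n. f (u*n+v))" by (subst sum.reindex) (auto simp: inj_on_def)
    finally show "sum f {u*n..<u*n+n} = (\<Sum>v<n. f (u*n+v))" .
  qed
  finally show ?thesis .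
qed

lemma kron_mult:
  assumes A: "A \<in> carrier_mat r1 k1" and B: "B \<in> carrier_mat r2 k2" and C: "C \<in> carrier_mat k1 c1" and D: "D \<in> carrier_mat k2 c2"
  shows "kron A B * kron C D = kron (A * C) (B * D)"
proof (rule eq_matI)
  fix i j assume "i < dim_row (kron (A * C) (B * D))" "j < dim_col (kron (A * C) (B * D))"
  then have i: "i < r1 * r2" and j: "j < c1 * c2" using A B C D by auto
  have r2: "r2 > 0" using i by (cases r2) auto
  have c2: "c2 > 0" using j by (cases c2) auto
  have id: "i div r2 < r1" "i mod r2 < r2" "j div c2 < c1" "j mod c2 < c2"
    using i j r2 c2 by (auto simp: less_mult_imp_div_less)
  have KA: "kron A B \<in> carrier_mat (r1*r2) (k1*k2)" using A B kron_carrier[of A B] by auto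
  have KC: "kron C D \<in> carrier_mat (k1*k2) (c1*c2)" using C D kron_carrier[of C D] by auto
  have "(kron A B * kron C D) $$ (i,j) = (\<Sum>k<k1*k2. kron A B $$ (i,k) * kron C D $$ (k,j))"
    by (rule mult_entry[OF KA KC i j])
  also have "\<dots> = (\<Sum>u<k1. \<Sum>v<k2. kron A B $$ (i,u*k2+v) * kron C D $$ (u*k2+v,j))"
    by (rule sum_split)
  also have "\<dots> = (\<Sum>u<k1. \<Sum>v<k2. (A $$ (i div r2, u) * C $$ (u, j div c2)) * (B $$ (i mod r2, v) * D $$ (v, j mod c2)))"
  proof (intro sum.cong refl)
    fix u v assume u: "u \<in> {..<k1}" and v: "v \<in> {..<k2}"
    have uv: "u*k2+v < k1*k2" using u v
      by (metis lessThan_iff add.commute add_less_cancel_left less_le_trans mult_Suc mult_le_mono1 Suc_leI)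
    have "kron A B $$ (i,u*k2+v) = A $$ (i div r2, u) * B $$ (i mod r2, v)"
      using A B i uv v by (simp add: kron_index)
    moreover have "kron C D $$ (u*k2+v,j) = C $$ (u, j div c2) * D $$ (v, j mod c2)"
      using C D j uv v by (simp add: kron_index)
    ultimately show "kron A B $$ (i,u*k2+v) * kron C D $$ (u*k2+v,j) = (A $$ (i div r2, u) * C $$ (u, j div c2)) * (B $$ (i mod r2, v) * D $$ (v, j mod c2))"
      by (simp add: ac_simps)
  qed
  also have "\<dots> = (\<Sum>u<k1. A $$ (i div r2, u) * C $$ (u, j div c2)) * (\<Sum>v<k2. B $$ (i mod r2, v) * D $$ (v, j mod c2))"
    by (simp add: sum_product)
  also have "\<dots> = (A * C) $$ (i div r2, j div c2) * (B * D) $$ (i mod r2, j mod c2)"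
    using mult_entry[OF A C id(1) id(3)] mult_entry[OF B D id(2) id(4)] by simp
  also have "\<dots> = kron (A * C) (B * D) $$ (i,j)"
    using A B C D i j by (simp add: kron_index)
  finally show "(kron A B * kron C D) $$ (i,j) = kron (A * C) (B * D) $$ (i,j)" .
qed (use A B C D in auto)

lemma kron_one: "kron (1\<^sub>m m) (1\<^sub>m n) = 1\<^sub>m (m*n)"
proof (rule eq_matI)
  fix i j assume "i < dim_row (1\<^sub>m (m * n))" "j < dim_col (1\<^sub>m (m * n))"
  then have i: "i < m*n" and j: "j < m*n" by auto
  have n: "n > 0" using i by (cases n) auto
  have "(i div n = j div n \<and> i mod n = j mod n) \<longleftrightarrow> i = j"
    by (metis div_mult_mod_eq)
  then show "kron (1\<^sub>m m) (1\<^sub>m n) $$ (i, j) = 1\<^sub>m (m * n) $$ (i, j)"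
    using i j n by (auto simp: kron_index less_mult_imp_div_less)
qed auto

lemma stensor_dim[simp]: "smod_dim (stensor M N) = smod_dim M * smod_dim N"
  by (simp add: stensor_def Let_def)

lemma stensor_par: "smod_par (stensor M N) i = (smod_par M (i div smod_dim N) \<noteq> smod_par N (i mod smod_dim N))"
  by (simp add: stensor_def Let_def)

lemma wf_stensor: "wfm (stensor M N)"
  by (simp add: wfm_def stensor_def Let_def)

definition sD :: "gen \<Rightarrow> smod \<Rightarrow> complex mat" where
  "sD x M = (if odd_gen x then parm M else 1\<^sub>m (smod_dim M))"

lemma sD_carrier[simp]: "sD x M \<in> carrier_mat (smod_dim M) (smod_dim M)"
  by (simp add: sD_def)

lemma sD_dim[simp]: "dim_row (sD x M) = smod_dim M" "dim_col (sD x M) = smod_dim M"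
  by (simp_all add: sD_def)

lemma stensor_act: assumes "wfm M" "wfm N"
  shows "smod_act (stensor M N) x = kron (smod_act M x) (1\<^sub>m (smod_dim N)) + kron (sD x M) (smod_act N x)"
proof (rule eq_matI)
  note c = wf_carrier[OF assms(1), of x] wf_carrier[OF assms(2), of x]
  fix i j assume "i < dim_row (kron (smod_act M x) (1\<^sub>m (smod_dim N)) + kron (sD x M) (smod_act N x))"
     "j < dim_col (kron (smod_act M x) (1\<^sub>m (smod_dim N)) + kron (sD x M) (smod_act N x))"
  then have i: "i < smod_dim M * smod_dim N" and j: "j < smod_dim M * smod_dim N" using c by auto
  have n: "smod_dim N > 0" using i by (cases "smod_dim N") auto
  have id: "i div smod_dim N < smod_dim M" "i mod smod_dim N < smod_dim N" "j div smod_dim N < smod_dim M" "j mod smod_dim N < smod_dim N"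
    using i j n by (auto simp: less_mult_imp_div_less)
  show "smod_act (stensor M N) x $$ (i, j) = (kron (smod_act M x) (1\<^sub>m (smod_dim N)) + kron (sD x M) (smod_act N x)) $$ (i, j)"
    using c i j id by (simp add: stensor_def Let_def kron_index sD_def parm_def sgm_def)
qed (use wf_carrier[OF assms(1), of x] wf_carrier[OF assms(2), of x] in \<open>auto simp: stensor_def Let_def\<close>)

lemma parm_stensor: "parm (stensor M N) = kron (parm M) (parm N)"
proof (rule eq_matI)
  fix i j assume "i < dim_row (kron (parm M) (parm N))" "j < dim_col (kron (parm M) (parm N))"
  then have i: "i < smod_dim M * smod_dim N" and j: "j < smod_dim M * smod_dim N" by auto
  have n: "smod_dim N > 0" using i by (cases "smod_dim N") auto
  have id: "i div smod_dim N < smod_dim M" "i mod smod_dim N < smod_dim N" "j div smod_dim N < smod_dim M" "j mod smod_dim N < smod_dim N"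
    using i j n by (auto simp: less_mult_imp_div_less)
  have e: "(i div smod_dim N = j div smod_dim N \<and> i mod smod_dim N = j mod smod_dim N) \<longleftrightarrow> i = j"
    by (metis div_mult_mod_eq)
  show "parm (stensor M N) $$ (i, j) = kron (parm M) (parm N) $$ (i, j)"
    using i j id e by (auto simp: kron_index parm_def sgm_def stensor_par)
qed auto

lemma kron_add_mult_l:
  assumes "T \<in> carrier_mat m m" "U \<in> carrier_mat n n" "A \<in> carrier_mat m m" "B \<in> carrier_mat n n" "C \<in> carrier_mat m m" "D \<in> carrier_mat n n"
  shows "kron T U * (kron A B + kron C D) = kron (T*A) (U*B) + kron (T*C) (U*D)"
proof -
  have "kron T U * (kron A B + kron C D) = kron T U * kron A B + kron T U * kron C D"
    by (rule mult_add_distrib_mat[of _ "m*n" "m*n"]) (use assms kron_carrier in auto)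
  then show ?thesis using kron_mult[of T m m U n n] assms by simp
qed

lemma kron_add_mult_r:
  assumes "T \<in> carrier_mat m m" "U \<in> carrier_mat n n" "A \<in> carrier_mat m m" "B \<in> carrier_mat n n" "C \<in> carrier_mat m m" "D \<in> carrier_mat n n"
  shows "(kron A B + kron C D) * kron T U = kron (A*T) (B*U) + kron (C*T) (D*U)"
proof -
  have "(kron A B + kron C D) * kron T U = kron A B * kron T U + kron C D * kron T U"
    by (rule add_mult_distrib_mat[of _ "m*n" "m*n"]) (use assms kron_carrier in auto)
  then show ?thesis using kron_mult[of A m m B n n] kron_mult[of C m m D n n] assms by simp
qed

lemma tensor_cong:
  assumes w: "wfm M" "wfm M'" "wfm N" "wfm N'" and i1: "smod_iso M M'" and i2: "smod_iso N N'"
  shows "smod_iso (stensor M N) (stensor M' N')"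
proof -
  obtain T1 S1 where d1: "smod_dim M' = smod_dim M" and c1: "T1 \<in> carrier_mat (smod_dim M) (smod_dim M)" "S1 \<in> carrier_mat (smod_dim M) (smod_dim M)"
    and TS1: "T1 * S1 = 1\<^sub>m (smod_dim M)" and ST1: "S1 * T1 = 1\<^sub>m (smod_dim M)" and p1: "T1 * parm M = parm M' * T1"
    and a1: "\<And>x. T1 * smod_act M x = smod_act M' x * T1"
    using isoE[OF i1] by blast
  obtain T2 S2 where d2: "smod_dim N' = smod_dim N" and c2: "T2 \<in> carrier_mat (smod_dim N) (smod_dim N)" "S2 \<in> carrier_mat (smod_dim N) (smod_dim N)"
    and TS2: "T2 * S2 = 1\<^sub>m (smod_dim N)" and ST2: "S2 * T2 = 1\<^sub>m (smod_dim N)" and p2: "T2 * parm N = parm N' * T2"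
    and a2: "\<And>x. T2 * smod_act N x = smod_act N' x * T2"
    using isoE[OF i2] by blast
  define m where "m = smod_dim M"
  define n where "n = smod_dim N"
  have cs: "T1 \<in> carrier_mat m m" "S1 \<in> carrier_mat m m" "T2 \<in> carrier_mat n n" "S2 \<in> carrier_mat n n"
     "parm M \<in> carrier_mat m m" "parm M' \<in> carrier_mat m m" "parm N \<in> carrier_mat n n" "parm N' \<in> carrier_mat n n"
     "sD x M \<in> carrier_mat m m" "sD x M' \<in> carrier_mat m m"
     "smod_act M x \<in> carrier_mat m m" "smod_act M' x \<in> carrier_mat m m"
     "smod_act N x \<in> carrier_mat n n" "smod_act N' x \<in> carrier_mat n n" for x
    using c1 c2 d1 d2 m_def n_def sD_carrier[of x M] sD_carrier[of x M']
      wf_carrier[OF w(1), of x] wf_carrier[OF w(2), of x] wf_carrier[OF w(3), of x] wf_carrier[OF w(4), of x] by auto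
  show ?thesis
  proof (rule isoI[of _ "m*n" _ "kron T1 T2" "kron S1 S2"])
    show "smod_dim (stensor M N) = m * n" "smod_dim (stensor M' N') = m * n" using d1 d2 m_def n_def by auto
    show "kron T1 T2 \<in> carrier_mat (m * n) (m * n)" "kron S1 S2 \<in> carrier_mat (m * n) (m * n)"
      using cs kron_carrier[of T1 T2] kron_carrier[of S1 S2] by auto
    show "kron T1 T2 * kron S1 S2 = 1\<^sub>m (m * n)"
      using kron_mult[OF cs(1,3,2,4)] TS1 TS2 m_def n_def kron_one by simp
    show "kron S1 S2 * kron T1 T2 = 1\<^sub>m (m * n)"
      using kron_mult[OF cs(2,4,1,3)] ST1 ST2 m_def n_def kron_one by simp
    show "kron T1 T2 * parm (stensor M N) = parm (stensor M' N') * kron T1 T2"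
      unfolding parm_stensor using kron_mult[OF cs(1,3,5,7)] kron_mult[OF cs(6,8,1,3)] p1 p2 by simp
    fix x
    have e1: "T1 * sD x M = sD x M' * T1" using p1 cs m_def d1 by (auto simp: sD_def)
    have "kron T1 T2 * smod_act (stensor M N) x = kron (T1 * smod_act M x) (T2 * 1\<^sub>m n) + kron (T1 * sD x M) (T2 * smod_act N x)"
      unfolding stensor_act[OF w(1,3)] using kron_add_mult_l[OF cs(1,3) cs(11) _ cs(9) cs(13)] n_def by simp
    also have "\<dots> = kron (smod_act M' x * T1) (1\<^sub>m n * T2) + kron (sD x M' * T1) (smod_act N' x * T2)"
      using a1 a2 e1 cs by simp
    also have "\<dots> = (kron (smod_act M' x) (1\<^sub>m n) + kron (sD x M') (smod_act N' x)) * kron T1 T2"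
      using kron_add_mult_r[OF cs(1,3) cs(12) _ cs(10) cs(14)] by simp
    also have "\<dots> = smod_act (stensor M' N') x * kron T1 T2"
      unfolding stensor_act[OF w(2,4)] using d2 n_def by simp
    finally show "kron T1 T2 * smod_act (stensor M N) x = smod_act (stensor M' N') x * kron T1 T2" .
  qed
qed

lemma divmod_shift: assumes "0 < (n::nat)" "a*n \<le> i"
  shows "(i - a*n) div n = i div n - a" "(i - a*n) mod n = i mod n"
proof -
  obtain k where k: "i = a*n + k" using assms(2) le_Suc_ex by blast
  show "(i - a*n) div n = i div n - a" using assms(1) k by simp
  show "(i - a*n) mod n = i mod n" using assms(1) k by simp
qed

lemma stensor_index: "i < smod_dim M * smod_dim N \<Longrightarrow> j < smod_dim M * smod_dim N \<Longrightarrow>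
  smod_act (stensor M N) x $$ (i,j) =
   (if i mod smod_dim N = j mod smod_dim N then smod_act M x $$ (i div smod_dim N, j div smod_dim N) else 0)
   + (if i div smod_dim N = j div smod_dim N then (if odd_gen x \<and> smod_par M (j div smod_dim N) then -1 else 1)
        * smod_act N x $$ (i mod smod_dim N, j mod smod_dim N) else 0)"
  by (simp add: stensor_def Let_def)

lemma dsum_index: "i < smod_dim A + smod_dim B \<Longrightarrow> j < smod_dim A + smod_dim B \<Longrightarrow>
  smod_act (dsum A B) x $$ (i,j) = (if i < smod_dim A \<and> j < smod_dim A then smod_act A x $$ (i, j)
         else if smod_dim A \<le> i \<and> smod_dim A \<le> j then smod_act B x $$ (i - smod_dim A, j - smod_dim A) else 0)"
  by (simp add: dsum_def Let_def)

lemma stensor_dsum: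
  assumes w: "wfm A" "wfm B" "wfm N"
  shows "smod_iso (stensor (dsum A B) N) (dsum (stensor A N) (stensor B N))"
proof (rule iso_eqI[OF wf_stensor])
  define a where "a = smod_dim A"
  define b where "b = smod_dim B"
  define n where "n = smod_dim N"
  show "smod_dim (dsum (stensor A N) (stensor B N)) = smod_dim (stensor (dsum A B) N)"
    by (simp add: add_mult_distrib)
  show "smod_par (dsum (stensor A N) (stensor B N)) i = smod_par (stensor (dsum A B) N) i"
    if i: "i < smod_dim (stensor (dsum A B) N)" for i
  proof -
    have i': "i < (a+b)*n" using i a_def b_def n_def by simp
    then have n: "n > 0" by (cases n) auto
    show ?thesis
    proof (cases "i < a*n")
      case True
      then have "i div n < a" using n by (simp add: div_less_iff_less_mult)
      then show ?thesis using True by (simp add: dsum_par stensor_par a_def b_def n_def)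
    next
      case False
      then have "\<not> i div n < a" using n by (simp add: div_less_iff_less_mult)
      then show ?thesis using False divmod_shift[OF n, of a i] by (simp add: dsum_par stensor_par a_def b_def n_def)
    qed
  qed
  fix x
  note c = wf_carrier[OF w(1), of x] wf_carrier[OF w(2), of x] wf_carrier[OF w(3), of x]
  show "smod_act (dsum (stensor A N) (stensor B N)) x = smod_act (stensor (dsum A B) N) x"
  proof (rule eq_matI)
    fix i j assume "i < dim_row (smod_act (stensor (dsum A B) N) x)" "j < dim_col (smod_act (stensor (dsum A B) N) x)"
    then have i: "i < (a+b)*n" and j: "j < (a+b)*n" by (simp_all add: stensor_def Let_def a_def b_def n_def)
    then have n: "n > 0" by (cases n) auto
    have ii: "i div n < a + b" "j div n < a + b" "i mod n < n" "j mod n < n" using i j n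
      by (auto simp: div_less_iff_less_mult)
    have ia: "(i < a*n) = (i div n < a)" "(j < a*n) = (j div n < a)" using n by (simp_all add: div_less_iff_less_mult)
    have lt: "i < a * n + b * n" "j < a * n + b * n" using i j by (simp_all add: add_mult_distrib)
    have L: "smod_act (stensor (dsum A B) N) x $$ (i,j) =
       (if i mod n = j mod n then smod_act (dsum A B) x $$ (i div n, j div n) else 0)
       + (if i div n = j div n then (if odd_gen x \<and> smod_par (dsum A B) (j div n) then -1 else 1)
        * smod_act N x $$ (i mod n, j mod n) else 0)"
      using i j by (subst stensor_index) (simp_all add: a_def b_def n_def)
    have R: "smod_act (dsum (stensor A N) (stensor B N)) x $$ (i,j) = (if i < a*n \<and> j < a*n then smod_act (stensor A N) x $$ (i, j)
         else if a*n \<le> i \<and> a*n \<le> j then smod_act (stensor B N) x $$ (i - a*n, j - a*n) else 0)"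
      using lt by (subst dsum_index) (simp_all add: a_def b_def n_def)
    have D: "smod_act (dsum A B) x $$ (i div n, j div n) = (if i div n < a \<and> j div n < a then smod_act A x $$ (i div n, j div n)
         else if a \<le> i div n \<and> a \<le> j div n then smod_act B x $$ (i div n - a, j div n - a) else 0)"
      using ii by (subst dsum_index) (simp_all add: a_def b_def n_def)
    show "smod_act (dsum (stensor A N) (stensor B N)) x $$ (i,j) = smod_act (stensor (dsum A B) N) x $$ (i,j)"
    proof (cases "i < a*n"; cases "j < a*n")
      assume h: "i < a*n" "j < a*n"
      then show ?thesis unfolding L R D using ii ia n
        by (subst stensor_index) (simp_all add: a_def b_def n_def dsum_par)
    next
      assume "i < a*n" "\<not> j < a*n"
      then show ?thesis unfolding L R D using ii ia n by auto
    next
      assume "\<not> i < a*n" "j < a*n"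
      then show ?thesis unfolding L R D using ii ia n by auto
    next
      assume h: "\<not> i < a*n" "\<not> j < a*n"
      have s: "(i - a*n) div n = i div n - a" "(i - a*n) mod n = i mod n" "(j - a*n) div n = j div n - a" "(j - a*n) mod n = j mod n"
        using divmod_shift[OF n, of a i] divmod_shift[OF n, of a j] h by auto
      have l2: "i - a*n < b * n" "j - a*n < b*n" using lt h by auto
      have e: "(i div n - a = j div n - a) = (i div n = j div n)" using h ia by auto
      show ?thesis unfolding L R D using ii ia n h s l2 e
        by (subst stensor_index) (simp_all add: a_def b_def n_def dsum_par)
    qed
  qed (simp_all add: dsum_def stensor_def Let_def add_mult_distrib)
qed

lemma stensor_zero: "smod_iso (stensor zero_mod N) zero_mod"
  by (rule iso_eqI[OF wf_stensor]) (auto simp: zero_mod_def stensor_def Let_def intro!: eq_matI)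

lemma wf_triv: "wfm triv_mod" by (simp add: wfm_def triv_mod_def)

lemma triv_stensor: assumes w: "wfm M" shows "smod_iso M (stensor triv_mod M)"
proof (rule iso_eqI[OF w])
  show "smod_dim (stensor triv_mod M) = smod_dim M" by (simp add: triv_mod_def)
  show "smod_par (stensor triv_mod M) i = smod_par M i" if "i < smod_dim M" for i
    using that by (simp add: stensor_par triv_mod_def)
  fix x
  show "smod_act (stensor triv_mod M) x = smod_act M x"
    using wf_carrier[OF w, of x] by (intro eq_matI) (auto simp: stensor_def triv_mod_def Let_def)
qed

lemma wf_dl: "(\<forall>m\<in>set ms. wfm m) \<Longrightarrow> wfm (dsum_list ms)"
  by (induction ms) (auto simp: dsum_list_def wf_zero wf_dsum)

lemma dl_cons: "dsum_list (m # ms) = dsum m (dsum_list ms)"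
  by (simp add: dsum_list_def)

lemma dl_nil: "dsum_list [] = zero_mod"
  by (simp add: dsum_list_def)

lemma dl_append:
  assumes "\<forall>m\<in>set xs. wfm m" "\<forall>m\<in>set ys. wfm m"
  shows "smod_iso (dsum_list (xs @ ys)) (dsum (dsum_list xs) (dsum_list ys))"
  using assms
proof (induction xs)
  case Nil
  then show ?case using dsum_zero_l[OF wf_dl[of ys]] by (simp add: dl_nil)
next
  case (Cons x xs)
  have w: "wfm x" "wfm (dsum_list xs)" "wfm (dsum_list ys)" "wfm (dsum_list (xs @ ys))"
    using Cons.prems by (auto intro!: wf_dl)
  have "smod_iso (dsum x (dsum_list (xs @ ys))) (dsum x (dsum (dsum_list xs) (dsum_list ys)))"
    using dsum_cong[OF w(1) w(1) w(4) wf_dsum[OF w(2,3)] iso_refl[OF w(1)] Cons.IH] Cons.prems by auto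
  then show ?case by (simp add: dl_cons dsum_assoc)
qed

lemma dl_append_sym:
  assumes "\<forall>m\<in>set xs. wfm m" "\<forall>m\<in>set ys. wfm m"
  shows "smod_iso (dsum (dsum_list xs) (dsum_list ys)) (dsum_list (xs @ ys))"
  using iso_sym[OF wf_dl wf_dsum[OF wf_dl wf_dl] dl_append[OF assms]] assms by auto

lemma dl_move:
  assumes "wfm x" "\<forall>m\<in>set ys1. wfm m" "\<forall>m\<in>set ys2. wfm m"
  shows "smod_iso (dsum_list (x # ys1 @ ys2)) (dsum_list (ys1 @ x # ys2))"
proof -
  have w: "wfm (dsum_list ys1)" "wfm (dsum_list ys2)" "wfm (dsum_list (ys1 @ ys2))" "wfm (dsum_list (ys1 @ x # ys2))"
    using assms by (auto intro!: wf_dl)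
  have 1: "smod_iso (dsum_list (x # ys1 @ ys2)) (dsum x (dsum (dsum_list ys1) (dsum_list ys2)))"
    unfolding dl_cons using dsum_cong[OF assms(1) assms(1) w(3) wf_dsum[OF w(1,2)] iso_refl[OF assms(1)] dl_append[OF assms(2,3)]] .
  have 2: "dsum x (dsum (dsum_list ys1) (dsum_list ys2)) = dsum (dsum x (dsum_list ys1)) (dsum_list ys2)"
    by (simp add: dsum_assoc)
  have 3: "smod_iso (dsum (dsum x (dsum_list ys1)) (dsum_list ys2)) (dsum (dsum (dsum_list ys1) x) (dsum_list ys2))"
    using dsum_cong[OF wf_dsum[OF assms(1) w(1)] wf_dsum[OF w(1) assms(1)] w(2) w(2) dsum_comm[OF assms(1) w(1)] iso_refl[OF w(2)]] .
  have 4: "dsum (dsum (dsum_list ys1) x) (dsum_list ys2) = dsum (dsum_list ys1) (dsum_list (x # ys2))"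
    by (simp add: dsum_assoc dl_cons)
  have 5: "smod_iso (dsum (dsum_list ys1) (dsum_list (x # ys2))) (dsum_list (ys1 @ x # ys2))"
    using dl_append_sym[of ys1 "x # ys2"] assms by auto
  have wa: "wfm (dsum_list (x # ys1 @ ys2))" "wfm (dsum x (dsum (dsum_list ys1) (dsum_list ys2)))"
    "wfm (dsum (dsum (dsum_list ys1) x) (dsum_list ys2))"
    using assms w by (auto intro!: wf_dl wf_dsum)
  have "smod_iso (dsum_list (x # ys1 @ ys2)) (dsum (dsum (dsum_list ys1) x) (dsum_list ys2))"
    using iso_trans[OF wa(1) wa(2) wa(3) 1] 2 3 by simp
  then show ?thesis using iso_trans[OF wa(1) wa(3) w(4)] 4 5 by simp
qed

lemma dl_perm:
  assumes "mset xs = mset ys" "\<forall>m\<in>set xs. wfm m"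
  shows "smod_iso (dsum_list xs) (dsum_list ys)"
  using assms
proof (induction xs arbitrary: ys)
  case Nil
  then show ?case by (simp add: iso_refl wf_zero dl_nil)
next
  case (Cons x xs)
  have "x \<in> set ys" using Cons.prems(1) by (metis list.set_intros(1) set_mset_mset)
  then obtain ys1 ys2 where ys: "ys = ys1 @ x # ys2" by (meson split_list)
  have m: "mset xs = mset (ys1 @ ys2)" using Cons.prems(1) ys by simp
  have sy: "set ys = set (x # xs)" using Cons.prems(1) by (metis mset_eq_setD)
  have wy: "\<forall>m\<in>set ys. wfm m" using sy Cons.prems(2) by simp
  have w: "wfm x" "\<forall>m\<in>set ys1. wfm m" "\<forall>m\<in>set ys2. wfm m" "\<forall>m\<in>set xs. wfm m" using wy ys Cons.prems(2) by auto
  have IH: "smod_iso (dsum_list xs) (dsum_list (ys1 @ ys2))" using Cons.IH[OF m w(4)] .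
  have 1: "smod_iso (dsum_list (x # xs)) (dsum_list (x # ys1 @ ys2))"
    unfolding dl_cons using dsum_cong[OF w(1) w(1) wf_dl[OF w(4)] wf_dl[of "ys1 @ ys2"] iso_refl[OF w(1)] IH] w by auto
  have ww: "wfm (dsum_list (x # xs))" "wfm (dsum_list (x # ys1 @ ys2))" "wfm (dsum_list (ys1 @ x # ys2))"
    using w by (auto intro!: wf_dl)
  show ?case using iso_trans[OF ww 1 dl_move[OF w(1-3)]] ys by simp
qed

lemma tensor_list:
  assumes "wfm N" "\<forall>m\<in>set ms. wfm m \<and> (\<forall>z\<in>set (f m). wfm z) \<and> smod_iso (stensor m N) (dsum_list (f m))"
  shows "smod_iso (stensor (dsum_list ms) N) (dsum_list (concat (map f ms)))"
  using assms(2)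
proof (induction ms)
  case Nil
  then show ?case using stensor_zero by (simp add: dl_nil)
next
  case (Cons m ms)
  have w: "wfm m" "\<forall>z\<in>set (f m). wfm z" "wfm (dsum_list ms)" "\<forall>z\<in>set (concat (map f ms)). wfm z"
    using Cons.prems by (auto intro!: wf_dl)
  have i1: "smod_iso (stensor m N) (dsum_list (f m))" using Cons.prems by auto
  have IH: "smod_iso (stensor (dsum_list ms) N) (dsum_list (concat (map f ms)))" using Cons.IH Cons.prems by auto
  have 1: "smod_iso (stensor (dsum m (dsum_list ms)) N) (dsum (stensor m N) (stensor (dsum_list ms) N))"
    by (rule stensor_dsum[OF w(1) w(3) assms(1)])
  have 2: "smod_iso (dsum (stensor m N) (stensor (dsum_list ms) N)) (dsum (dsum_list (f m)) (dsum_list (concat (map f ms))))"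
    by (rule dsum_cong[OF wf_stensor wf_dl[OF w(2)] wf_stensor wf_dl[OF w(4)] i1 IH])
  have 3: "smod_iso (dsum (dsum_list (f m)) (dsum_list (concat (map f ms)))) (dsum_list (f m @ concat (map f ms)))"
    by (rule dl_append_sym[OF w(2) w(4)])
  have "smod_iso (stensor (dsum m (dsum_list ms)) N) (dsum (dsum_list (f m)) (dsum_list (concat (map f ms))))"
    by (rule iso_trans[OF wf_stensor wf_dsum[OF wf_stensor wf_stensor] wf_dsum[OF wf_dl[OF w(2)] wf_dl[OF w(4)]] 1 2])
  moreover have "\<forall>z\<in>set (f m @ concat (map f ms)). wfm z" using w by auto
  ultimately have "smod_iso (stensor (dsum m (dsum_list ms)) N) (dsum_list (f m @ concat (map f ms)))"
    using iso_trans[OF wf_stensor wf_dsum[OF wf_dl[OF w(2)] wf_dl[OF w(4)]] wf_dl _ 3] by blast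
  then show ?case by (simp add: dl_cons)
qed

definition mli :: "nat \<Rightarrow> int list list \<Rightarrow> complex mat" where
  "mli n X = mat n n (\<lambda>(i,j). of_int (X ! i ! j))"

definition lmul :: "nat \<Rightarrow> int list list \<Rightarrow> int list list \<Rightarrow> int list list" where
  "lmul n X Y = map (\<lambda>i. map (\<lambda>j. sum_list (map (\<lambda>k. X!i!k * Y!k!j) [0..<n])) [0..<n]) [0..<n]"

definition ladd :: "nat \<Rightarrow> int list list \<Rightarrow> int list list \<Rightarrow> int list list" where
  "ladd n X Y = map (\<lambda>i. map (\<lambda>j. X!i!j + Y!i!j) [0..<n]) [0..<n]"

definition lkron :: "nat \<Rightarrow> nat \<Rightarrow> int list list \<Rightarrow> int list list \<Rightarrow> int list list" where
  "lkron m n A B = map (\<lambda>i. map (\<lambda>j. A!(i div n)!(j div n) * B!(i mod n)!(j mod n)) [0..<m*n]) [0..<m*n]"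

definition lfb :: "nat \<Rightarrow> nat \<Rightarrow> int list list \<Rightarrow> int list list \<Rightarrow> int list list" where
  "lfb m n A B = map (\<lambda>i. map (\<lambda>j. if i < m \<and> j < m then A!i!j else if m \<le> i \<and> m \<le> j then B!(i-m)!(j-m) else 0) [0..<m+n]) [0..<m+n]"

definition idl :: "nat \<Rightarrow> int list list" where
  "idl n = map (\<lambda>i. map (\<lambda>j. if i = j then 1 else 0) [0..<n]) [0..<n]"

lemma mli_carrier[simp]: "mli n X \<in> carrier_mat n n" by (simp add: mli_def)
lemma mli_dim[simp]: "dim_row (mli n X) = n" "dim_col (mli n X) = n" by (simp_all add: mli_def)
lemma mli_index: "i < n \<Longrightarrow> j < n \<Longrightarrow> mli n X $$ (i,j) = of_int (X ! i ! j)" by (simp add: mli_def)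

lemma mli_mult: "mli n X * mli n Y = mli n (lmul n X Y)"
proof (rule eq_matI)
  fix i j assume "i < dim_row (mli n (lmul n X Y))" "j < dim_col (mli n (lmul n X Y))"
  then have i: "i < n" and j: "j < n" by auto
  have "(mli n X * mli n Y) $$ (i,j) = (\<Sum>k<n. mli n X $$ (i,k) * mli n Y $$ (k,j))"
    by (rule mult_entry[OF mli_carrier mli_carrier i j])
  also have "\<dots> = (\<Sum>k<n. of_int (X!i!k * Y!k!j))" by (rule sum.cong) (auto simp: mli_index i j)
  also have "\<dots> = of_int (\<Sum>k<n. X!i!k * Y!k!j)" by simp
  also have "(\<Sum>k<n. X!i!k * Y!k!j) = sum_list (map (\<lambda>k. X!i!k * Y!k!j) [0..<n])"
    by (simp add: sum_set_upt_conv_sum_list_nat[symmetric] lessThan_atLeast0)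
  finally show "(mli n X * mli n Y) $$ (i,j) = mli n (lmul n X Y) $$ (i,j)"
    using i j by (simp add: mli_index lmul_def)
qed auto

lemma mli_add: "mli n X + mli n Y = mli n (ladd n X Y)"
  by (rule eq_matI) (auto simp: mli_def ladd_def)

lemma mli_kron: "kron (mli m A) (mli n B) = mli (m*n) (lkron m n A B)"
proof (rule eq_matI)
  fix i j assume "i < dim_row (mli (m*n) (lkron m n A B))" "j < dim_col (mli (m*n) (lkron m n A B))"
  then have i: "i < m*n" and j: "j < m*n" by auto
  have n: "n > 0" using i by (cases n) auto
  have id: "i div n < m" "i mod n < n" "j div n < m" "j mod n < n"
    using i j n by (auto simp: less_mult_imp_div_less)
  show "kron (mli m A) (mli n B) $$ (i, j) = mli (m * n) (lkron m n A B) $$ (i, j)"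
    using i j id by (simp add: kron_index mli_index lkron_def)
qed auto

lemma mli_fb: "four_block_mat (mli m A) (0\<^sub>m m n) (0\<^sub>m n m) (mli n B) = mli (m+n) (lfb m n A B)"
  by (rule eq_matI) (auto simp: mli_def lfb_def)

lemma mli_one: "1\<^sub>m n = mli n (idl n)"
  by (rule eq_matI) (auto simp: mli_def idl_def)

lemma mli_eqI: "X = Y \<Longrightarrow> mli n X = mli n Y" by simp

definition isdiag :: "complex mat \<Rightarrow> nat \<Rightarrow> (nat \<Rightarrow> complex) \<Rightarrow> bool" where
  "isdiag A n \<alpha> \<longleftrightarrow> A \<in> carrier_mat n n \<and> (\<forall>i<n. \<forall>j<n. A $$ (i,j) = (if i = j then \<alpha> i else 0))"

lemma diag_comm:
  assumes A: "isdiag A n \<alpha>" and B: "isdiag B n \<beta>" and T: "T \<in> carrier_mat n n"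
    and h: "\<forall>i<n. \<forall>j<n. T $$ (i,j) \<noteq> 0 \<longrightarrow> \<beta> i = \<alpha> j"
  shows "T * A = B * T"
proof (rule eq_matI)
  have Ac: "A \<in> carrier_mat n n" and Bc: "B \<in> carrier_mat n n" using A B by (auto simp: isdiag_def)
  fix i j assume "i < dim_row (B * T)" "j < dim_col (B * T)"
  then have i: "i < n" and j: "j < n" using Bc T by auto
  have "(T * A) $$ (i,j) = (\<Sum>l<n. T $$ (i,l) * (if l = j then \<alpha> l else 0))"
    by (subst mult_entry[OF T Ac i j]) (rule sum.cong, use A j in \<open>auto simp: isdiag_def\<close>)
  also have "\<dots> = T $$ (i,j) * \<alpha> j" by (rule sum_delta_r[OF j])
  also have "\<dots> = \<beta> i * T $$ (i,j)" using h i j by (cases "T $$ (i,j) = 0") auto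
  also have "\<dots> = (\<Sum>l<n. (if i = l then \<beta> l else 0) * T $$ (l,j))" by (rule sum_delta_l[OF i, symmetric])
  also have "\<dots> = (B * T) $$ (i,j)"
    by (subst mult_entry[OF Bc T i j]) (rule sum.cong, use B i in \<open>auto simp: isdiag_def\<close>)
  finally show "(T * A) $$ (i,j) = (B * T) $$ (i,j)" .
qed (use assms in \<open>auto simp: isdiag_def\<close>)

lemma stensor_diag:
  assumes "isdiag (smod_act M G) (smod_dim M) \<alpha>" "isdiag (smod_act N G) (smod_dim N) \<beta>"
  shows "isdiag (smod_act (stensor M N) G) (smod_dim M * smod_dim N) (\<lambda>i. \<alpha> (i div smod_dim N) + \<beta> (i mod smod_dim N))"
  unfolding isdiag_def
proof (intro conjI allI impI)
  show "smod_act (stensor M N) G \<in> carrier_mat (smod_dim M * smod_dim N) (smod_dim M * smod_dim N)"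
    by (simp add: stensor_def Let_def)
  fix i j assume i: "i < smod_dim M * smod_dim N" and j: "j < smod_dim M * smod_dim N"
  have n: "smod_dim N > 0" using i by (cases "smod_dim N") auto
  have id: "i div smod_dim N < smod_dim M" "i mod smod_dim N < smod_dim N" "j div smod_dim N < smod_dim M" "j mod smod_dim N < smod_dim N"
    using i j n by (auto simp: less_mult_imp_div_less)
  have e: "(i div smod_dim N = j div smod_dim N \<and> i mod smod_dim N = j mod smod_dim N) \<longleftrightarrow> i = j"
    by (metis div_mult_mod_eq)
  show "smod_act (stensor M N) G $$ (i, j) = (if i = j then \<alpha> (i div smod_dim N) + \<beta> (i mod smod_dim N) else 0)"
    using assms id e by (auto simp: stensor_index[OF i j] isdiag_def)
qed

lemma dsum_diag:
  assumes "isdiag (smod_act A G) (smod_dim A) \<alpha>" "isdiag (smod_act B G) (smod_dim B) \<beta>"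
  shows "isdiag (smod_act (dsum A B) G) (smod_dim A + smod_dim B) (\<lambda>i. if i < smod_dim A then \<alpha> i else \<beta> (i - smod_dim A))"
  unfolding isdiag_def
proof (intro conjI allI impI)
  show "smod_act (dsum A B) G \<in> carrier_mat (smod_dim A + smod_dim B) (smod_dim A + smod_dim B)"
    by (simp add: dsum_def Let_def)
  fix i j assume i: "i < smod_dim A + smod_dim B" and j: "j < smod_dim A + smod_dim B"
  show "smod_act (dsum A B) G $$ (i, j) = (if i = j then (if i < smod_dim A then \<alpha> i else \<beta> (i - smod_dim A)) else 0)"
    using assms i j by (auto simp: dsum_index[OF i j] isdiag_def)
qed

lemma zero_diag: "isdiag (smod_act zero_mod G) 0 \<alpha>"
  by (simp add: isdiag_def zero_mod_def)

lemma c4: "(i::nat) < 4 \<Longrightarrow> i = 0 \<or> i = 1 \<or> i = 2 \<or> i = 3" by presburger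

lemma c16: "(i::nat) < 16 \<Longrightarrow> i = 0 \<or> i = 1 \<or> i = 2 \<or> i = 3 \<or> i = 4 \<or> i = 5 \<or> i = 6 \<or> i = 7 \<or> i = 8 \<or> i = 9 \<or> i = 10 \<or> i = 11 \<or> i = 12 \<or> i = 13 \<or> i = 14 \<or> i = 15"
  by presburger

lemma list_all2D: "list_all (\<lambda>i. list_all (P i) [0..<n]) [0..<n] \<Longrightarrow> \<forall>i<n. \<forall>j<n. P i j"
  by (auto simp: list_all_iff)

lemma wf_III: "wfm (III g r)" by (simp add: wfm_def III_def)
lemma III_dim[simp]: "smod_dim (III g r) = 4" by (simp add: III_def)

definition pf :: "bool \<Rightarrow> nat \<Rightarrow> bool" where "pf r k = (if k = 1 \<or> k = 2 then \<not> r else r)"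
lemma III_par: "smod_par (III g r) k = pf r k" by (simp add: III_def pf_def)

definition LX :: "gen \<Rightarrow> int list list" where
  "LX x = (case x of Qp \<Rightarrow> [[0,0,0,0],[1,0,0,0],[0,0,0,0],[0,0,1,0]]
                  | Qm \<Rightarrow> [[0,0,0,0],[0,0,0,0],[1,0,0,0],[0,-1,0,0]]
                  | _ \<Rightarrow> [[0,0,0,0],[0,0,0,0],[0,0,0,0],[0,0,0,0]])"

lemma III_act: "x \<noteq> G \<Longrightarrow> smod_act (III g r) x = mli 4 (LX x)"
proof (rule eq_matI)
  fix i j assume x: "x \<noteq> G" and "i < dim_row (mli 4 (LX x))" "j < dim_col (mli 4 (LX x))"
  then have i: "i < 4" and j: "j < 4" by auto
  show "smod_act (III g r) x $$ (i, j) = mli 4 (LX x) $$ (i, j)"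
    using c4[OF i] c4[OF j] x by (cases x) (auto simp: III_def mli_def LX_def)
qed (auto simp: III_def)

definition w0 :: "int list" where "w0 = [-1,0,-2,-1]"

lemma III_diag: "isdiag (smod_act (III g r) G) (smod_dim (III g r)) (\<lambda>i. of_int g + of_int (w0 ! i))"
  unfolding isdiag_def
proof (intro conjI allI impI)
  show "smod_act (III g r) G \<in> carrier_mat (smod_dim (III g r)) (smod_dim (III g r))" by (simp add: III_def)
  fix i j assume i: "i < smod_dim (III g r)" and j: "j < smod_dim (III g r)"
  then have i: "i < 4" and j: "j < 4" by simp_all
  show "smod_act (III g r) G $$ (i, j) = (if i = j then of_int g + of_int (w0 ! i) else 0)"
    using c4[OF i] i j by (auto simp: III_def w0_def)
qed

definition sg :: "bool \<Rightarrow> int" where "sg b = (if b then -1 else 1)"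
definition lpar :: "bool \<Rightarrow> int list list" where
  "lpar r = [[sg r,0,0,0],[0,sg (\<not>r),0,0],[0,0,sg (\<not>r),0],[0,0,0,sg r]]"

lemma parm_III: "parm (III g r) = mli 4 (lpar r)"
proof (rule eq_matI)
  fix i j assume "i < dim_row (mli 4 (lpar r))" "j < dim_col (mli 4 (lpar r))"
  then have i: "i < 4" and j: "j < 4" by auto
  show "parm (III g r) $$ (i, j) = mli 4 (lpar r) $$ (i, j)"
    using c4[OF i] c4[OF j] i j by (auto simp: parm_def mli_def lpar_def sgm_def sg_def III_def)
qed (auto simp: parm_def)

lemma zero_act: "smod_act zero_mod x = mli 0 []"
  by (rule eq_matI) (auto simp: zero_mod_def)

lemma dsum_diag': "isdiag (smod_act A G) (smod_dim A) \<alpha> \<Longrightarrow> isdiag (smod_act B G) (smod_dim B) \<beta> \<Longrightarrow>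
  isdiag (smod_act (dsum A B) G) (smod_dim (dsum A B)) (\<lambda>i. if i < smod_dim A then \<alpha> i else \<beta> (i - smod_dim A))"
  using dsum_diag by simp

lemma zero_dim[simp]: "smod_dim zero_mod = 0" by (simp add: zero_mod_def)

lemma zero_diag': "isdiag (smod_act zero_mod G) (smod_dim zero_mod) \<alpha>"
  by (simp add: isdiag_def zero_mod_def)

abbreviation DL :: "int \<Rightarrow> bool \<Rightarrow> bool \<Rightarrow> smod" where
  "DL a q p \<equiv> dsum_list [III (a+1) (q \<noteq> (\<not>p)), III a (q \<noteq> p), III a (q \<noteq> p), III (a-1) (q \<noteq> (\<not>p))]"

lemma DL_dim: "smod_dim (DL a q p) = 16"
  by (simp add: dl_cons dl_nil zero_mod_def)

lemma DL_act: "x \<noteq> G \<Longrightarrow> smod_act (DL a q p) x = mli 16 (lfb 4 12 (LX x) (lfb 4 8 (LX x) (lfb 4 4 (LX x) (lfb 4 0 (LX x) []))))"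
  by (simp add: dl_cons dl_nil dsum_act wf_III wf_dsum wf_zero III_act zero_act mli_fb)

lemma ST_act: "x \<noteq> G \<Longrightarrow> smod_act (stensor (III a q) (III 1 p)) x =
   mli 16 (ladd 16 (lkron 4 4 (LX x) (idl 4)) (lkron 4 4 (if odd_gen x then lpar q else idl 4) (LX x)))"
  by (simp add: stensor_act wf_III III_act sD_def parm_III mli_one mli_kron mli_add)

definition cD :: "int list" where "cD = map (\<lambda>i. [1,0,0,-1] ! (i div 4) + w0 ! (i mod 4)) [0..<16]"
definition cT :: "int list" where "cT = map (\<lambda>j. w0 ! (j div 4) + 1 + w0 ! (j mod 4)) [0..<16]"

lemma isdiag_cong: "isdiag A n f \<Longrightarrow> n = m \<Longrightarrow> (\<And>i. i < m \<Longrightarrow> f i = g i) \<Longrightarrow> isdiag A m g"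
  by (simp add: isdiag_def)

lemma DL_diag: "isdiag (smod_act (DL a q p) G) 16 (\<lambda>i. of_int a + of_int (cD ! i))"
  unfolding dl_cons dl_nil
proof (rule isdiag_cong[OF dsum_diag'[OF III_diag dsum_diag'[OF III_diag dsum_diag'[OF III_diag dsum_diag'[OF III_diag zero_diag'[of "\<lambda>_. 0"]]]], of "a+1" "q \<noteq> (\<not>p)" a "q \<noteq> p" a "q \<noteq> p" "a-1" "q \<noteq> (\<not>p)"]])
  show "smod_dim (dsum (III (a + 1) (q \<noteq> (\<not> p))) (dsum (III a (q \<noteq> p)) (dsum (III a (q \<noteq> p)) (dsum (III (a - 1) (q \<noteq> (\<not> p))) zero_mod)))) = 16" by simp
  fix i :: nat assume i: "i < 16"
  show "(if i < smod_dim (III (a + 1) (q \<noteq> (\<not> p))) then of_int (a + 1) + of_int (w0 ! i)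
          else if i - smod_dim (III (a + 1) (q \<noteq> (\<not> p))) < smod_dim (III a (q \<noteq> p))
               then of_int a + of_int (w0 ! (i - smod_dim (III (a + 1) (q \<noteq> (\<not> p)))))
               else if i - smod_dim (III (a + 1) (q \<noteq> (\<not> p))) - smod_dim (III a (q \<noteq> p)) < smod_dim (III a (q \<noteq> p))
                    then of_int a + of_int (w0 ! (i - smod_dim (III (a + 1) (q \<noteq> (\<not> p))) - smod_dim (III a (q \<noteq> p))))
                    else if i - smod_dim (III (a + 1) (q \<noteq> (\<not> p))) - smod_dim (III a (q \<noteq> p)) - smod_dim (III a (q \<noteq> p))
                            < smod_dim (III (a - 1) (q \<noteq> (\<not> p)))
                         then of_int (a - 1) + of_int (w0 ! (i - smod_dim (III (a + 1) (q \<noteq> (\<not> p))) - smod_dim (III a (q \<noteq> p)) - smod_dim (III a (q \<noteq> p))))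
                         else 0) = of_int a + (of_int (cD ! i) :: complex)"
    using c16[OF i] by (auto simp: cD_def w0_def)
qed

lemma ST_diag: "isdiag (smod_act (stensor (III a q) (III 1 p)) G) 16 (\<lambda>j. of_int a + of_int (cT ! j))"
proof -
  have d: "isdiag (smod_act (stensor (III a q) (III 1 p)) G) 16 (\<lambda>j. (of_int a + of_int (w0 ! (j div 4))) + (of_int 1 + of_int (w0 ! (j mod 4))))"
    using stensor_diag[OF III_diag III_diag, of a q 1 p] by simp
  have e: "(of_int a + of_int (w0 ! (j div 4))) + (of_int 1 + of_int (w0 ! (j mod 4))) = (of_int a + of_int (cT ! j) :: complex)"
    if j: "j < 16" for j
    using j by (simp add: cT_def)
  show ?thesis using d e unfolding isdiag_def by auto
qed

definition PD :: "bool \<Rightarrow> bool \<Rightarrow> bool list" where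
  "PD q p = map (\<lambda>i. pf ([q \<noteq> (\<not>p), q \<noteq> p, q \<noteq> p, q \<noteq> (\<not>p)] ! (i div 4)) (i mod 4)) [0..<16]"
definition PT :: "bool \<Rightarrow> bool \<Rightarrow> bool list" where
  "PT q p = map (\<lambda>j. pf q (j div 4) \<noteq> pf p (j mod 4)) [0..<16]"

lemma DL_par: "i < 16 \<Longrightarrow> smod_par (DL a q p) i = PD q p ! i"
  using c16[of i] by (auto simp: PD_def dl_cons dl_nil dsum_par III_par zero_mod_def)

lemma ST_par: "j < 16 \<Longrightarrow> smod_par (stensor (III a q) (III 1 p)) j = PT q p ! j"
  by (simp add: PT_def stensor_par III_par)

definition TL :: "bool \<Rightarrow> int list list" where
  "TL q = (if q then [[0,1,0,0,1,0,0,0,0,0,0,0,0,0,0,0],   [0,0,0,0,0,1,0,0,0,0,0,0,0,0,0,0],   [0,0,0,0,0,0,0,0,0,1,0,0,-1,0,0,0],   [0,0,0,0,0,0,0,0,0,0,0,0,0,1,0,0],   [1,0,0,0,0,0,0,0,0,0,0,0,0,0,0,0],   [0,0,0,0,1,0,0,0,0,0,0,0,0,0,0,0],   [0,0,0,0,0,0,0,0,1,0,0,0,0,0,0,0],   [0,0,0,0,0,0,0,0,0,0,0,0,1,0,0,0],   [0,0,0,1,0,0,1,0,0,-1,0,0,1,0,0,0],   [0,0,0,0,0,0,0,1,0,0,0,0,0,-1,0,0],   [0,0,0,0,0,0,0,0,0,0,0,1,0,0,-1,0],   [0,0,0,0,0,0,0,0,0,0,0,0,0,0,0,1],   [0,0,1,0,0,0,0,0,1,0,0,0,0,0,0,0],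   [0,0,0,0,0,0,1,0,0,0,0,0,1,0,0,0],   [0,0,0,0,0,0,0,0,0,0,1,0,0,0,0,0],   [0,0,0,0,0,0,0,0,0,0,0,0,0,0,1,0]] else [[0,1,0,0,-1,0,0,0,0,0,0,0,0,0,0,0],   [0,0,0,0,0,1,0,0,0,0,0,0,0,0,0,0],   [0,0,0,0,0,0,0,0,0,1,0,0,1,0,0,0],   [0,0,0,0,0,0,0,0,0,0,0,0,0,1,0,0],   [1,0,0,0,0,0,0,0,0,0,0,0,0,0,0,0],   [0,0,0,0,1,0,0,0,0,0,0,0,0,0,0,0],   [0,0,0,0,0,0,0,0,1,0,0,0,0,0,0,0],   [0,0,0,0,0,0,0,0,0,0,0,0,1,0,0,0],   [0,0,0,1,0,0,-1,0,0,1,0,0,1,0,0,0],   [0,0,0,0,0,0,0,1,0,0,0,0,0,1,0,0],   [0,0,0,0,0,0,0,0,0,0,0,1,0,0,1,0],   [0,0,0,0,0,0,0,0,0,0,0,0,0,0,0,1],   [0,0,1,0,0,0,0,0,-1,0,0,0,0,0,0,0],   [0,0,0,0,0,0,1,0,0,0,0,0,-1,0,0,0],   [0,0,0,0,0,0,0,0,0,0,1,0,0,0,0,0],   [0,0,0,0,0,0,0,0,0,0,0,0,0,0,1,0]])"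
definition SL :: "bool \<Rightarrow> int list list" where
  "SL q = (if q then [[0,0,0,0,1,0,0,0,0,0,0,0,0,0,0,0],   [1,0,0,0,0,-1,0,0,0,0,0,0,0,0,0,0],   [0,0,0,0,0,0,-1,0,0,0,0,0,1,0,0,0],   [0,0,1,0,0,0,0,1,1,0,0,0,0,-1,0,0],   [0,0,0,0,0,1,0,0,0,0,0,0,0,0,0,0],   [0,1,0,0,0,0,0,0,0,0,0,0,0,0,0,0],   [0,0,0,0,0,0,0,-1,0,0,0,0,0,1,0,0],   [0,0,0,1,0,0,0,0,0,1,0,0,0,0,0,0],   [0,0,0,0,0,0,1,0,0,0,0,0,0,0,0,0],   [0,0,1,0,0,0,0,1,0,0,0,0,0,0,0,0],   [0,0,0,0,0,0,0,0,0,0,0,0,0,0,1,0],   [0,0,0,0,0,0,0,0,0,0,1,0,0,0,0,1],   [0,0,0,0,0,0,0,1,0,0,0,0,0,0,0,0],   [0,0,0,1,0,0,0,0,0,0,0,0,0,0,0,0],   [0,0,0,0,0,0,0,0,0,0,0,0,0,0,0,1],   [0,0,0,0,0,0,0,0,0,0,0,1,0,0,0,0]] else [[0,0,0,0,1,0,0,0,0,0,0,0,0,0,0,0],   [1,0,0,0,0,1,0,0,0,0,0,0,0,0,0,0],   [0,0,0,0,0,0,1,0,0,0,0,0,1,0,0,0],   [0,0,-1,0,0,0,0,1,1,0,0,0,0,1,0,0],   [0,0,0,0,0,1,0,0,0,0,0,0,0,0,0,0],   [0,1,0,0,0,0,0,0,0,0,0,0,0,0,0,0],   [0,0,0,0,0,0,0,1,0,0,0,0,0,1,0,0],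   [0,0,0,-1,0,0,0,0,0,1,0,0,0,0,0,0],   [0,0,0,0,0,0,1,0,0,0,0,0,0,0,0,0],   [0,0,1,0,0,0,0,-1,0,0,0,0,0,0,0,0],   [0,0,0,0,0,0,0,0,0,0,0,0,0,0,1,0],   [0,0,0,0,0,0,0,0,0,0,1,0,0,0,0,-1],   [0,0,0,0,0,0,0,1,0,0,0,0,0,0,0,0],   [0,0,0,1,0,0,0,0,0,0,0,0,0,0,0,0],   [0,0,0,0,0,0,0,0,0,0,0,0,0,0,0,1],   [0,0,0,0,0,0,0,0,0,0,0,1,0,0,0,0]])"

lemma gi1_True: "lmul 16 (TL True) (SL True) = idl 16" by code_simp
lemma gi2_True: "lmul 16 (SL True) (TL True) = idl 16" by code_simp
lemma gG_True: "list_all (\<lambda>i. list_all (\<lambda>j. TL True ! i ! j = 0 \<or> cD ! i = cT ! j) [0..<16]) [0..<16]" by code_simp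
lemma gp_True_True: "list_all (\<lambda>i. list_all (\<lambda>j. TL True ! i ! j = 0 \<or> PD True True ! i = PT True True ! j) [0..<16]) [0..<16]" by code_simp
lemma gp_True_False: "list_all (\<lambda>i. list_all (\<lambda>j. TL True ! i ! j = 0 \<or> PD True False ! i = PT True False ! j) [0..<16]) [0..<16]" by code_simp
lemma ga_True_H: "lmul 16 (TL True) (ladd 16 (lkron 4 4 (LX H) (idl 4)) (lkron 4 4 (if odd_gen H then lpar True else idl 4) (LX H))) = lmul 16 (lfb 4 12 (LX H) (lfb 4 8 (LX H) (lfb 4 4 (LX H) (lfb 4 0 (LX H) [])))) (TL True)" by code_simp
lemma ga_True_Qp: "lmul 16 (TL True) (ladd 16 (lkron 4 4 (LX Qp) (idl 4)) (lkron 4 4 (if odd_gen Qp then lpar True else idl 4) (LX Qp))) = lmul 16 (lfb 4 12 (LX Qp) (lfb 4 8 (LX Qp) (lfb 4 4 (LX Qp) (lfb 4 0 (LX Qp) [])))) (TL True)" by code_simp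
lemma ga_True_Qm: "lmul 16 (TL True) (ladd 16 (lkron 4 4 (LX Qm) (idl 4)) (lkron 4 4 (if odd_gen Qm then lpar True else idl 4) (LX Qm))) = lmul 16 (lfb 4 12 (LX Qm) (lfb 4 8 (LX Qm) (lfb 4 4 (LX Qm) (lfb 4 0 (LX Qm) [])))) (TL True)" by code_simp
lemma gi1_False: "lmul 16 (TL False) (SL False) = idl 16" by code_simp
lemma gi2_False: "lmul 16 (SL False) (TL False) = idl 16" by code_simp
lemma gG_False: "list_all (\<lambda>i. list_all (\<lambda>j. TL False ! i ! j = 0 \<or> cD ! i = cT ! j) [0..<16]) [0..<16]" by code_simp
lemma gp_False_True: "list_all (\<lambda>i. list_all (\<lambda>j. TL False ! i ! j = 0 \<or> PD False True ! i = PT False True ! j) [0..<16]) [0..<16]" by code_simp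
lemma gp_False_False: "list_all (\<lambda>i. list_all (\<lambda>j. TL False ! i ! j = 0 \<or> PD False False ! i = PT False False ! j) [0..<16]) [0..<16]" by code_simp
lemma ga_False_H: "lmul 16 (TL False) (ladd 16 (lkron 4 4 (LX H) (idl 4)) (lkron 4 4 (if odd_gen H then lpar False else idl 4) (LX H))) = lmul 16 (lfb 4 12 (LX H) (lfb 4 8 (LX H) (lfb 4 4 (LX H) (lfb 4 0 (LX H) [])))) (TL False)" by code_simp
lemma ga_False_Qp: "lmul 16 (TL False) (ladd 16 (lkron 4 4 (LX Qp) (idl 4)) (lkron 4 4 (if odd_gen Qp then lpar False else idl 4) (LX Qp))) = lmul 16 (lfb 4 12 (LX Qp) (lfb 4 8 (LX Qp) (lfb 4 4 (LX Qp) (lfb 4 0 (LX Qp) [])))) (TL False)" by code_simp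
lemma ga_False_Qm: "lmul 16 (TL False) (ladd 16 (lkron 4 4 (LX Qm) (idl 4)) (lkron 4 4 (if odd_gen Qm then lpar False else idl 4) (LX Qm))) = lmul 16 (lfb 4 12 (LX Qm) (lfb 4 8 (LX Qm) (lfb 4 4 (LX Qm) (lfb 4 0 (LX Qm) [])))) (TL False)" by code_simp

lemma ground_inv: "lmul 16 (TL q) (SL q) = idl 16" "lmul 16 (SL q) (TL q) = idl 16"
  by (cases q, simp_all only: gi1_True gi1_False gi2_True gi2_False)+

lemma ground_G: "list_all (\<lambda>i. list_all (\<lambda>j. TL q ! i ! j = 0 \<or> cD ! i = cT ! j) [0..<16]) [0..<16]"
  by (cases q) (simp_all only: gG_True gG_False)

lemma ground_par: "list_all (\<lambda>i. list_all (\<lambda>j. TL q ! i ! j = 0 \<or> PD q p ! i = PT q p ! j) [0..<16]) [0..<16]"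
  by (cases q; cases p) (simp_all only: gp_True_True gp_True_False gp_False_True gp_False_False)

lemma ground_act: "x \<noteq> G \<Longrightarrow> lmul 16 (TL q) (ladd 16 (lkron 4 4 (LX x) (idl 4)) (lkron 4 4 (if odd_gen x then lpar q else idl 4) (LX x)))
   = lmul 16 (lfb 4 12 (LX x) (lfb 4 8 (LX x) (lfb 4 4 (LX x) (lfb 4 0 (LX x) [])))) (TL q)"
  by (cases x; cases q) (simp_all only: ga_True_H ga_True_Qp ga_True_Qm ga_False_H ga_False_Qp ga_False_Qm gen.simps(1-12) simp_thms)

lemma ST_dim: "smod_dim (stensor (III a q) (III 1 p)) = 16" by simp

lemma base: "smod_iso (stensor (III a q) (III 1 p)) (DL a q p)"
proof (rule isoI[of _ 16 _ "mli 16 (TL q)" "mli 16 (SL q)"])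
  show "smod_dim (stensor (III a q) (III 1 p)) = 16" by simp
  show "smod_dim (DL a q p) = 16" by (rule DL_dim)
  show "mli 16 (TL q) \<in> carrier_mat 16 16" "mli 16 (SL q) \<in> carrier_mat 16 16" by simp_all
  show "mli 16 (TL q) * mli 16 (SL q) = 1\<^sub>m 16" "mli 16 (SL q) * mli 16 (TL q) = 1\<^sub>m 16"
    by (simp_all add: mli_mult ground_inv mli_one)
  have ev: "\<forall>i<16. \<forall>j<16. mli 16 (TL q) $$ (i,j) \<noteq> 0 \<longrightarrow> smod_par (DL a q p) i = smod_par (stensor (III a q) (III 1 p)) j"
  proof (intro allI impI)
    fix i j assume i: "i < (16::nat)" and j: "j < (16::nat)" and nz: "mli 16 (TL q) $$ (i,j) \<noteq> 0"
    have "TL q ! i ! j \<noteq> 0" using nz i j by (simp add: mli_index)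
    then have e: "PD q p ! i = PT q p ! j" using list_all2D[OF ground_par[of q p]] i j by blast
    show "smod_par (DL a q p) i = smod_par (stensor (III a q) (III 1 p)) j"
      using DL_par[OF i, of a q p] ST_par[OF j, of a q p] e by argo
  qed
  show "mli 16 (TL q) * parm (stensor (III a q) (III 1 p)) = parm (DL a q p) * mli 16 (TL q)"
    using even_iff[of "mli 16 (TL q)" "DL a q p" "stensor (III a q) (III 1 p)", unfolded DL_dim ST_dim, OF mli_carrier] ev by blast
  fix x
  show "mli 16 (TL q) * smod_act (stensor (III a q) (III 1 p)) x = smod_act (DL a q p) x * mli 16 (TL q)"
  proof (cases "x = G")
    case True
    have h: "\<forall>i<16. \<forall>j<16. mli 16 (TL q) $$ (i,j) \<noteq> 0 \<longrightarrow> of_int a + of_int (cD ! i) = (of_int a + of_int (cT ! j) :: complex)"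
      using list_all2D[OF ground_G[of q]] by (auto simp: mli_index)
    show ?thesis using diag_comm[OF ST_diag DL_diag mli_carrier h] True by simp
  next
    case False
    show ?thesis unfolding ST_act[OF False] DL_act[OF False] mli_mult using ground_act[OF False] by simp
  qed
qed

lemma gen_of_num: "gen_of 0 = H" "gen_of 1 = G" "gen_of 2 = Qp" "gen_of 3 = Qm"
  by (simp_all add: numeral_eq_Suc)

definition LA :: "gen \<Rightarrow> int list list" where
  "LA x = (case x of H \<Rightarrow> [[0,0,0,0],[0,0,0,0],[0,0,0,0],[0,0,0,0]]
                 | G \<Rightarrow> [[0,0,0,0],[0,0,0,0],[0,0,1,0],[0,0,0,-1]]
                 | Qp \<Rightarrow> [[0,0,0,1],[0,0,0,0],[0,-1,0,0],[0,0,0,0]]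
                 | Qm \<Rightarrow> [[0,0,1,0],[0,0,0,0],[0,0,0,0],[0,1,0,0]])"

lemma adj_act: "smod_act adjoint_mod x = mli 4 (LA x)"
proof (rule eq_matI)
  fix i j assume "i < dim_row (mli 4 (LA x))" "j < dim_col (mli 4 (LA x))"
  then have i: "i < 4" and j: "j < 4" by auto
  show "smod_act adjoint_mod x $$ (i, j) = mli 4 (LA x) $$ (i, j)"
    using c4[OF i] c4[OF j] by (cases x) (auto simp: adjoint_mod_def mli_def LA_def gen_of_num)
qed (auto simp: adjoint_mod_def)

lemma adj_dim[simp]: "smod_dim adjoint_mod = 4" by (simp add: adjoint_mod_def)

lemma wf_adj: "wfm adjoint_mod" by (simp add: wfm_def adjoint_mod_def)

definition LG1 :: "int list list" where "LG1 = [[0,0,0,0],[0,1,0,0],[0,0,-1,0],[0,0,0,0]]"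

lemma III1_G: "smod_act (III 1 r) G = mli 4 LG1"
proof (rule eq_matI)
  fix i j assume "i < dim_row (mli 4 LG1)" "j < dim_col (mli 4 LG1)"
  then have i: "i < 4" and j: "j < 4" by auto
  show "smod_act (III 1 r) G $$ (i, j) = mli 4 LG1 $$ (i, j)"
    using c4[OF i] c4[OF j] by (auto simp: III_def mli_def LG1_def)
qed (auto simp: III_def)

definition TA :: "int list list" where "TA = [[0,1,0,0],[0,0,-1,0],[0,0,0,1],[1,0,0,0]]"
definition SA :: "int list list" where "SA = [[0,0,0,1],[1,0,0,0],[0,-1,0,0],[0,0,1,0]]"

lemma gadj1: "lmul 4 TA SA = idl 4" by code_simp
lemma gadj2: "lmul 4 SA TA = idl 4" by code_simp
lemma gadjH: "lmul 4 TA (LA H) = lmul 4 (LX H) TA" by code_simp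
lemma gadjG: "lmul 4 TA (LA G) = lmul 4 LG1 TA" by code_simp
lemma gadjQp: "lmul 4 TA (LA Qp) = lmul 4 (LX Qp) TA" by code_simp
lemma gadjQm: "lmul 4 TA (LA Qm) = lmul 4 (LX Qm) TA" by code_simp

lemma adj_iso: "smod_iso adjoint_mod (III 1 False)"
proof (rule isoI[of _ 4 _ "mli 4 TA" "mli 4 SA"])
  show "mli 4 TA * mli 4 SA = 1\<^sub>m 4" "mli 4 SA * mli 4 TA = 1\<^sub>m 4"
    by (simp_all add: mli_mult gadj1 gadj2 mli_one)
  have ev: "\<forall>i<4. \<forall>j<4. mli 4 TA $$ (i,j) \<noteq> 0 \<longrightarrow> smod_par (III 1 False) i = smod_par adjoint_mod j"
  proof (intro allI impI)
    fix i j :: nat assume i: "i < 4" and j: "j < 4" and nz: "mli 4 TA $$ (i,j) \<noteq> 0"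
    show "smod_par (III 1 False) i = smod_par adjoint_mod j"
      using c4[OF i] c4[OF j] nz i j by (auto simp: mli_index TA_def III_def adjoint_mod_def gen_of_num)
  qed
  show "mli 4 TA * parm adjoint_mod = parm (III 1 False) * mli 4 TA"
    using even_iff[of "mli 4 TA" "III 1 False" adjoint_mod] ev by simp
  fix x show "mli 4 TA * smod_act adjoint_mod x = smod_act (III 1 False) x * mli 4 TA"
    by (cases x) (simp_all add: adj_act III_act III1_G mli_mult gadjH gadjG gadjQp gadjQm)
qed auto

definition IIIp :: "int \<times> bool \<Rightarrow> smod" where "IIIp y = III (fst y) (snd y)"

lemma wf_IIIp: "wfm (IIIp y)" by (simp add: IIIp_def wf_III)

lemma wf_pow: "wfm M \<Longrightarrow> wfm (stensor_pow M n)"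
  by (induction n) (auto simp: wf_triv wf_stensor)

lemma tensor_list':
  assumes "wfm N" "\<forall>x\<in>set xs. wfm (g x) \<and> (\<forall>z\<in>set (h x). wfm z) \<and> smod_iso (stensor (g x) N) (dsum_list (h x))"
  shows "smod_iso (stensor (dsum_list (map g xs)) N) (dsum_list (concat (map h xs)))"
  using assms(2)
proof (induction xs)
  case Nil
  then show ?case using stensor_zero by (simp add: dl_nil)
next
  case (Cons y ys)
  have w: "wfm (g y)" "\<forall>z\<in>set (h y). wfm z" "wfm (dsum_list (map g ys))" "\<forall>z\<in>set (concat (map h ys)). wfm z"
    using Cons.prems by (auto intro!: wf_dl)
  have i1: "smod_iso (stensor (g y) N) (dsum_list (h y))" using Cons.prems by auto
  have IH: "smod_iso (stensor (dsum_list (map g ys)) N) (dsum_list (concat (map h ys)))" using Cons.IH Cons.prems by auto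
  have 1: "smod_iso (stensor (dsum (g y) (dsum_list (map g ys))) N) (dsum (stensor (g y) N) (stensor (dsum_list (map g ys)) N))"
    by (rule stensor_dsum[OF w(1) w(3) assms(1)])
  have 2: "smod_iso (dsum (stensor (g y) N) (stensor (dsum_list (map g ys)) N)) (dsum (dsum_list (h y)) (dsum_list (concat (map h ys))))"
    by (rule dsum_cong[OF wf_stensor wf_dl[OF w(2)] wf_stensor wf_dl[OF w(4)] i1 IH])
  have 3: "smod_iso (dsum (dsum_list (h y)) (dsum_list (concat (map h ys)))) (dsum_list (h y @ concat (map h ys)))"
    by (rule dl_append_sym[OF w(2) w(4)])
  have "smod_iso (stensor (dsum (g y) (dsum_list (map g ys))) N) (dsum (dsum_list (h y)) (dsum_list (concat (map h ys))))"
    by (rule iso_trans[OF wf_stensor wf_dsum[OF wf_stensor wf_stensor] wf_dsum[OF wf_dl[OF w(2)] wf_dl[OF w(4)]] 1 2])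
  moreover have "\<forall>z\<in>set (h y @ concat (map h ys)). wfm z" using w by auto
  ultimately have "smod_iso (stensor (dsum (g y) (dsum_list (map g ys))) N) (dsum_list (h y @ concat (map h ys)))"
    using iso_trans[OF wf_stensor wf_dsum[OF wf_dl[OF w(2)] wf_dl[OF w(4)]] wf_dl _ 3] by blast
  then show ?case by (simp add: dl_cons)
qed

definition g4 :: "bool \<Rightarrow> int \<times> bool \<Rightarrow> (int \<times> bool) list" where
  "g4 p y = [(fst y + 1, snd y \<noteq> (\<not>p)), (fst y, snd y \<noteq> p), (fst y, snd y \<noteq> p), (fst y - 1, snd y \<noteq> (\<not>p))]"

lemma base_g4: "smod_iso (stensor (IIIp y) (III 1 p)) (dsum_list (map IIIp (g4 p y)))"
  using base[of "fst y" "snd y" p] by (simp add: IIIp_def g4_def)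

definition tgt :: "nat \<Rightarrow> int list" where
  "tgt n = concat (map (\<lambda>l. replicate ((2*n - 2) choose nat (int n - l)) l) [2 - int n..int n])"

definition bnm :: "nat \<Rightarrow> int \<Rightarrow> nat" where "bnm N k = (if k < 0 then 0 else N choose nat k)"

lemma count_rep: "distinct L \<Longrightarrow> count (mset (concat (map (\<lambda>l. replicate (f l) l) L))) x = (if x \<in> set L then f x else 0)"
  by (induction L) auto

lemma count_tgt: "n \<ge> 1 \<Longrightarrow> count (mset (tgt n)) l = bnm (2*n-2) (int n - l)"
proof -
  assume n: "n \<ge> 1"
  have c: "count (mset (tgt n)) l = (if l \<in> set [2 - int n..int n] then (2*n - 2) choose nat (int n - l) else 0)"
    unfolding tgt_def by (rule count_rep) simp
  show ?thesis
  proof (cases "l \<in> set [2 - int n..int n]")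
    case True then show ?thesis using c by (simp add: bnm_def)
  next
    case False
    then have "l > int n \<or> l < 2 - int n" by auto
    then show ?thesis
    proof
      assume "l > int n" then show ?thesis using c False by (simp add: bnm_def)
    next
      assume l: "l < 2 - int n"
      then have "nat (int n - l) > 2*n - 2" using n by linarith
      then have z: "(2*n - 2) choose nat (int n - l) = 0" by (simp add: binomial_eq_0)
      have cnt: "count (mset (tgt n)) l = 0" using c False by auto
      have k: "(int n - l < 0) = False" using l n by simp
      show ?thesis by (simp only: bnm_def k if_False z cnt)
    qed
  qed
qed

lemma bnm_rec: "bnm (N+2) (k+1) = bnm N (k+1) + 2 * bnm N k + bnm N (k-1)"
proof (cases "k < -1")
  case True then show ?thesis by (simp add: bnm_def)
next
  case False
  then consider "k = -1" | "k = 0" | "k \<ge> 1" by linarith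
  then show ?thesis
  proof cases
    case 1 then show ?thesis by (simp add: bnm_def)
  next
    case 2 then show ?thesis by (simp add: bnm_def)
  next
    case 3
    then obtain m where m: "k = int m + 1" by (metis add.commute int_ge_induct le_add_same_cancel1 nat_int nat_le_iff
      zle_iff_zadd)
    have e1: "nat (k+1) = Suc (Suc m)" "nat k = Suc m" "nat (k-1) = m" using m by auto
    have "Suc (Suc N) choose Suc (Suc m) = (N choose Suc (Suc m)) + 2 * (N choose Suc m) + (N choose m)"
      by simp
    then show ?thesis using 3 m e1 by (simp add: bnm_def)
  qed
qed

lemma count_h4: "count (mset (concat (map (\<lambda>l. [l+1, l, l, l-1]) L))) (x::int)
   = count (mset L) (x-1) + 2 * count (mset L) x + count (mset L) (x+1)"
  by (induction L) auto

lemma tgt_step: "n \<ge> 1 \<Longrightarrow> mset (concat (map (\<lambda>l. [l+1, l, l, l-1]) (tgt n))) = mset (tgt (Suc n))"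
proof (rule multiset_eqI)
  fix x :: int assume n: "n \<ge> 1"
  have N: "2 * Suc n - 2 = (2*n - 2) + 2" using n by simp
  have "count (mset (concat (map (\<lambda>l. [l+1, l, l, l-1]) (tgt n)))) x
     = bnm (2*n-2) (int n - (x-1)) + 2 * bnm (2*n-2) (int n - x) + bnm (2*n-2) (int n - (x+1))"
    by (simp add: count_h4 count_tgt[OF n])
  also have "\<dots> = bnm (2*n-2+2) ((int n - x) + 1)"
    by (subst bnm_rec) (simp add: algebra_simps)
  also have "\<dots> = count (mset (tgt (Suc n))) x"
    using count_tgt[of "Suc n" x] N by (simp add: algebra_simps)
  finally show "count (mset (concat (map (\<lambda>l. [l+1, l, l, l-1]) (tgt n)))) x = count (mset (tgt (Suc n))) x" .
qed

lemma main_ex: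
  assumes n: "n \<ge> 1"
  shows "\<exists>xs. smod_iso (stensor_pow (III 1 p) n) (dsum_list (map IIIp xs)) \<and> mset (map fst xs) = mset (tgt n)"
  using n
proof (induction n rule: dec_induct)
  case base
  have t: "tgt 1 = [1]" by (simp add: tgt_def)
  have A: "smod_iso (stensor_pow (III 1 p) 1) (III 1 p)"
    using iso_sym[OF wf_III wf_stensor triv_stensor[OF wf_III]] by simp
  have B: "smod_iso (III 1 p) (dsum_list (map IIIp [(1,p)]))"
    using dsum_zero_r[OF wf_III] by (simp add: IIIp_def dl_cons dl_nil)
  have wl: "wfm (dsum_list (map IIIp [(1,p)]))" by (auto intro!: wf_dl simp: wf_IIIp)
  have "smod_iso (stensor_pow (III 1 p) 1) (dsum_list (map IIIp [(1,p)]))"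
    by (rule iso_trans[OF wf_pow[OF wf_III] wf_III wl A B])
  then show ?case using t by (intro exI[of _ "[(1,p)]"]) simp
next
  case (step n)
  obtain xs where i: "smod_iso (stensor_pow (III 1 p) n) (dsum_list (map IIIp xs))" and m: "mset (map fst xs) = mset (tgt n)"
    using step.IH by blast
  have w: "wfm (dsum_list (map IIIp xs))" by (auto intro!: wf_dl simp: wf_IIIp)
  have 1: "smod_iso (stensor (stensor_pow (III 1 p) n) (III 1 p)) (stensor (dsum_list (map IIIp xs)) (III 1 p))"
    by (rule tensor_cong[OF wf_pow[OF wf_III] w wf_III wf_III i iso_refl[OF wf_III]])
  have 2: "smod_iso (stensor (dsum_list (map IIIp xs)) (III 1 p)) (dsum_list (concat (map (\<lambda>y. map IIIp (g4 p y)) xs)))"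
    by (rule tensor_list'[OF wf_III]) (auto simp: wf_IIIp base_g4)
  have e: "concat (map (\<lambda>y. map IIIp (g4 p y)) xs) = map IIIp (concat (map (g4 p) xs))"
    by (simp add: map_concat comp_def)
  have 3: "smod_iso (stensor_pow (III 1 p) (Suc n)) (dsum_list (map IIIp (concat (map (g4 p) xs))))"
    using iso_trans[OF wf_stensor wf_stensor wf_dl 1 2] e by (auto simp: wf_IIIp)
  have f: "map fst (concat (map (g4 p) xs)) = concat (map (\<lambda>l. [l+1, l, l, l-1]) (map fst xs))"
    by (induction xs) (auto simp: g4_def)
  have "mset (concat (map (\<lambda>l. [l+1, l, l, l-1]) (map fst xs))) = mset (concat (map (\<lambda>l. [l+1, l, l, l-1]) (tgt n)))"
    by (rule multiset_eqI, unfold count_h4, simp only: m)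
  then have "mset (map fst (concat (map (g4 p) xs))) = mset (tgt (Suc n))"
    using f tgt_step[OF step.hyps(1)] by simp
  then show ?case using 3 by blast
qed

lemma len_filter_count: "length (filter (\<lambda>y. fst y = l) xs) = count (mset (map fst xs)) l"
  by (induction xs) auto

lemma mset_filter_union: "(\<And>y. \<not> (P y \<and> Q y)) \<Longrightarrow> mset (filter P xs) + mset (filter Q xs) = mset (filter (\<lambda>y. P y \<or> Q y) xs)"
  by (induction xs) auto

lemma mset_concat_filter: "distinct L \<Longrightarrow>
  mset (concat (map (\<lambda>l. filter (\<lambda>y. fst y = l) xs) L)) = mset (filter (\<lambda>y. fst y \<in> set L) xs)"
proof (induction L)
  case Nil then show ?case by simp
next
  case (Cons l L)
  have "mset (concat (map (\<lambda>l. filter (\<lambda>y. fst y = l) xs) (l # L)))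
      = mset (filter (\<lambda>y. fst y = l) xs) + mset (filter (\<lambda>y. fst y \<in> set L) xs)"
    using Cons by simp
  also have "\<dots> = mset (filter (\<lambda>y. fst y = l \<or> fst y \<in> set L) xs)"
    by (rule mset_filter_union) (use Cons.prems in auto)
  finally show ?case by simp
qed

lemma final_form:
  assumes n: "n \<ge> 1" and w: "wfm M" and i: "smod_iso M (dsum_list (map IIIp xs))" and m: "mset (map fst xs) = mset (tgt n)"
  shows "\<exists>par :: int \<Rightarrow> nat \<Rightarrow> bool. smod_iso M (dsum_list (concat (map (\<lambda>l. map (\<lambda>k. III l (par l k))
                      [0..<(2*n - 2) choose nat (int n - l)]) [2 - int n..int n])))"
proof -
  define L where "L = [2 - int n..int n]"
  define c where "c l = (2*n - 2) choose nat (int n - l)" for l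
  define F where "F l = filter (\<lambda>y. fst y = l) xs" for l
  define par where "par l k = snd (F l ! k)" for l k
  have cnt: "count (mset (tgt n)) l = (if l \<in> set L then c l else 0)" for l
    unfolding tgt_def L_def c_def by (rule count_rep) simp
  have len: "length (F l) = c l" if "l \<in> set L" for l
    using that cnt[of l] m len_filter_count[of l xs] by (simp add: F_def)
  have eql: "map (\<lambda>k. III l (par l k)) [0..<c l] = map IIIp (F l)" if l: "l \<in> set L" for l
  proof (rule nth_equalityI)
    show "length (map (\<lambda>k. III l (par l k)) [0..<c l]) = length (map IIIp (F l))" using len[OF l] by simp
    fix k assume "k < length (map (\<lambda>k. III l (par l k)) [0..<c l])"
    then have k: "k < c l" by simp
    then have "F l ! k \<in> set (F l)" using len[OF l] by simp
    then have f: "fst (F l ! k) = l" by (simp add: F_def)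
    show "map (\<lambda>k. III l (par l k)) [0..<c l] ! k = map IIIp (F l) ! k"
      using k len[OF l] f by (simp add: par_def IIIp_def)
  qed
  have big: "concat (map (\<lambda>l. map (\<lambda>k. III l (par l k)) [0..<c l]) L) = map IIIp (concat (map F L))"
  proof -
    have A: "map (\<lambda>l. map (\<lambda>k. III l (par l k)) [0..<c l]) L = map (\<lambda>l. map IIIp (F l)) L"
      using eql by (rule map_cong[OF refl])
    show ?thesis unfolding A by (simp add: map_concat comp_def)
  qed
  have sub: "fst y \<in> set L" if "y \<in> set xs" for y
  proof -
    have "fst y \<in> set (map fst xs)" using that by simp
    then have "fst y \<in> set (tgt n)" using m by (metis set_mset_mset)
    then show ?thesis unfolding tgt_def L_def by auto
  qed
  have ms: "mset (concat (map F L)) = mset xs"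
  proof -
    have "mset (concat (map F L)) = mset (filter (\<lambda>y. fst y \<in> set L) xs)"
      unfolding F_def by (rule mset_concat_filter) (simp add: L_def)
    also have "filter (\<lambda>y. fst y \<in> set L) xs = xs" using sub by simp
    finally show ?thesis .
  qed
  have wl: "\<forall>z\<in>set (map IIIp xs). wfm z" by (simp add: wf_IIIp)
  have p: "smod_iso (dsum_list (map IIIp xs)) (dsum_list (map IIIp (concat (map F L))))"
    by (rule dl_perm[OF _ wl]) (simp add: ms)
  have "smod_iso M (dsum_list (map IIIp (concat (map F L))))"
    by (rule iso_trans[OF w wf_dl[OF wl] wf_dl i p]) (simp add: wf_IIIp)
  then have "smod_iso M (dsum_list (concat (map (\<lambda>l. map (\<lambda>k. III l (par l k)) [0..<c l]) L)))"
    using big by simp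
  then show ?thesis unfolding L_def c_def by blast
qed

lemma pow_cong: "wfm M \<Longrightarrow> wfm N \<Longrightarrow> smod_iso M N \<Longrightarrow> smod_iso (stensor_pow M n) (stensor_pow N n)"
  by (induction n) (auto simp: iso_refl wf_triv intro!: tensor_cong wf_pow)

theorem proposition2p3:
  fixes n :: nat
  assumes "n \<ge> 1"
  shows "(\<exists>p. smod_iso adjoint_mod (III 1 p)
              \<and> smod_iso (stensor_pow adjoint_mod n) (stensor_pow (III 1 p) n))
       \<and> (\<forall>p. \<exists>par :: int \<Rightarrow> nat \<Rightarrow> bool.
              smod_iso (stensor_pow (III 1 p) n)
                (dsum_list (concat (map (\<lambda>l. map (\<lambda>k. III l (par l k))
                      [0..<(2*n - 2) choose nat (int n - l)])
                   [2 - int n..int n]))))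
       \<and> (\<exists>par :: int \<Rightarrow> nat \<Rightarrow> bool.
              smod_iso (stensor_pow adjoint_mod n)
                (dsum_list (concat (map (\<lambda>l. map (\<lambda>k. III l (par l k))
                      [0..<(2*n - 2) choose nat (int n - l)])
                   [2 - int n..int n]))))"
proof (intro conjI allI)
  have pc: "smod_iso (stensor_pow adjoint_mod n) (stensor_pow (III 1 False) n)"
    by (rule pow_cong[OF wf_adj wf_III adj_iso])
  show "\<exists>p. smod_iso adjoint_mod (III 1 p) \<and> smod_iso (stensor_pow adjoint_mod n) (stensor_pow (III 1 p) n)"
    using adj_iso pc by blast
  fix p
  obtain xs where i: "smod_iso (stensor_pow (III 1 p) n) (dsum_list (map IIIp xs))" and m: "mset (map fst xs) = mset (tgt n)"
    using main_ex[OF assms] by blast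
  show "\<exists>par :: int \<Rightarrow> nat \<Rightarrow> bool. smod_iso (stensor_pow (III 1 p) n)
                (dsum_list (concat (map (\<lambda>l. map (\<lambda>k. III l (par l k))
                      [0..<(2*n - 2) choose nat (int n - l)]) [2 - int n..int n])))"
    by (rule final_form[OF assms wf_pow[OF wf_III] i m])
next
  obtain xs where i: "smod_iso (stensor_pow (III 1 False) n) (dsum_list (map IIIp xs))" and m: "mset (map fst xs) = mset (tgt n)"
    using main_ex[OF assms] by blast
  have pc: "smod_iso (stensor_pow adjoint_mod n) (stensor_pow (III 1 False) n)"
    by (rule pow_cong[OF wf_adj wf_III adj_iso])
  have i2: "smod_iso (stensor_pow adjoint_mod n) (dsum_list (map IIIp xs))"
    by (rule iso_trans[OF wf_pow[OF wf_adj] wf_pow[OF wf_III] wf_dl pc i]) (simp add: wf_IIIp)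
  show "\<exists>par :: int \<Rightarrow> nat \<Rightarrow> bool. smod_iso (stensor_pow adjoint_mod n)
                (dsum_list (concat (map (\<lambda>l. map (\<lambda>k. III l (par l k))
                      [0..<(2*n - 2) choose nat (int n - l)]) [2 - int n..int n])))"
    by (rule final_form[OF assms wf_pow[OF wf_adj] i2 m])
qed

end
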